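(* Let $\lambda/\mu$ be an r-shape and $\mathbf a',\mathbf b'$ row flags for it. Then $$\overline{\mathsf S}^{\mathbf a',\mathbf b'}_{\lambda/\mu}(\mathbf y/\mathbf z)=\sum_{T\in\overline{ST}_{\lambda/\mu}(\mathbf a',\mathbf b')}wt(T).$$
   Context: Young diagrams in English notation; cell $(i,j)$ in row $i$, column $j$. An r-shape is $(\lambda/\mu,r)$ with shifted contents $c(i,j)=j-i+r-1+\lambda'_1$. Row flags: vectors $\mathbf a'=(a'_i),\mathbf b'=(b'_i)$ of integers with $a'_i\le a'_{i+1}$, $b'_i\le b'_{i+1}$ whenever $\mu_i<\lambda_{i+1}$. $\mathbf y_{a,b}=(y_a,\ldots,y_b)$ (empty if $a>b$); $h_n(\mathbf x/\mathbf w)=\sum_{i=0}^n(-1)^{n-i}h_i(\mathbf x)e_{n-i}(\mathbf w)$ ($h_0=1$, $h_n=0$ for $n<0$). The row flagged supersymmetric Schur function is $\overline{\mathsf S}^{\mathbf a',\mathbf b'}_{\lambda/\mu}(\mathbf y/\mathbf z)=\det[h_{\lambda_i-\mu_j-i+j}(\mathbf y_{a'_j,b'_i}/\mathbf z_{a_j,b_i})]_{1\le i,j\le n}$ for $n\ge\ell(\lambda)$, where $a_j=a'_j+c(\zeta_j)$, $b_i=b'_i+c(\xi_i)$ with $\zeta_j$ the leftmost cell of row $j$ and $\xi_i$ the rightmost cell of row $i$. A row flagged $\mathbb Z$-SSYT is a filling $\tilde T$ of the cells by integers, weakly increasing along rows, strictly increasing down columns, with $a'_i\le\tilde T_{ij}\le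 b'_i$ for every cell in row $i$. A row flagged super tableau $T$ is obtained from $\tilde T$ by choosing independently for each cell either $T_{ij}=\tilde T_{ij}\in\mathbb Z$ or $T_{ij}=(\tilde T_{ij}+c(i,j))'\in\mathbb Z'$ (primed integers). $\overline{ST}_{\lambda/\mu}(\mathbf a',\mathbf b')$ is the set of all such. $wt(T)=\prod wt(T_{ij})$ with $wt(r)=y_r$, $wt(r')=-z_r$. *)

theory Defs
  imports "HOL-Library.Multiset" "Jordan_Normal_Form.Determinant"
begin

definition is_partition :: "nat list \<Rightarrow> bool" where
  "is_partition p \<longleftrightarrow> sorted (rev p) \<and> 0 \<notin> set p"

(* 1-based part access: p_i, with p_i = 0 for i = 0 or i > length p *)
definition part :: "nat list \<Rightarrow> nat \<Rightarrow> nat" where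
  "part p i = (if 1 \<le> i \<and> i \<le> length p then p ! (i - 1) else 0)"

definition contained :: "nat list \<Rightarrow> nat list \<Rightarrow> bool" where
  "contained mu lam \<longleftrightarrow> (\<forall>i. part mu i \<le> part lam i)"

(* cells (i,j) of the skew diagram lam/mu, English notation, 1-based *)
definition cells :: "nat list \<Rightarrow> nat list \<Rightarrow> (nat \<times> nat) set" where
  "cells lam mu = {(i, j). 1 \<le> i \<and> i \<le> length lam \<and> part mu i < j \<and> j \<le> part lam i}"

(* shifted content c(i,j) = j - i + r - 1 + lambda'_1, where lambda'_1 = length lam *)
definition content :: "nat list \<Rightarrow> int \<Rightarrow> nat \<Rightarrow> nat \<Rightarrow> int" where
  "content lam r i j = int j - int i + r - 1 + int (length lam)"

definition row_flags :: "nat list \<Rightarrow> nat list \<Rightarrow> (nat \<Rightarrow> int) \<Rightarrow> (nat \<Rightarrow> int) \<Rightarrow> bool" where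
  "row_flags lam mu a' b' \<longleftrightarrow>
     (\<forall>i\<ge>1. part mu i < part lam (Suc i) \<longrightarrow> a' i \<le> a' (Suc i) \<and> b' i \<le> b' (Suc i))"

definition hcomp :: "(int \<Rightarrow> 'a::comm_ring_1) \<Rightarrow> int \<Rightarrow> int \<Rightarrow> nat \<Rightarrow> 'a" where
  "hcomp x a b k = (\<Sum>M\<in>{M. set_mset M \<subseteq> {a..b} \<and> size M = k}. \<Prod>\<^sub># (image_mset x M))"

definition elem :: "(int \<Rightarrow> 'a::comm_ring_1) \<Rightarrow> int \<Rightarrow> int \<Rightarrow> nat \<Rightarrow> 'a" where
  "elem w a b k = (\<Sum>S\<in>{S. S \<subseteq> {a..b} \<and> card S = k}. \<Prod>i\<in>S. w i)"

definition hsup :: "(int \<Rightarrow> 'a::comm_ring_1) \<Rightarrow> (int \<Rightarrow> 'a) \<Rightarrow> int \<Rightarrow> int \<Rightarrow> int \<Rightarrow> int \<Rightarrow> int \<Rightarrow> 'a" where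
  "hsup y z a' b' a b n =
     (if n < 0 then 0 else
      (\<Sum>i\<in>{0..nat n}. (-1) ^ (nat n - i) * hcomp y a' b' i * elem z a b (nat n - i)))"

definition flagged_schur ::
  "nat list \<Rightarrow> nat list \<Rightarrow> int \<Rightarrow> (nat \<Rightarrow> int) \<Rightarrow> (nat \<Rightarrow> int) \<Rightarrow> (int \<Rightarrow> 'a::comm_ring_1) \<Rightarrow> (int \<Rightarrow> 'a) \<Rightarrow> nat \<Rightarrow> 'a" where
  "flagged_schur lam mu r a' b' y z n =
     det (mat n n (\<lambda>(i0, j0).
       let i = Suc i0; j = Suc j0;
           a = a' j + content lam r j (Suc (part mu j));
           b = b' i + content lam r i (part lam i)
       in hsup y z (a' j) (b' i) a b
            (int (part lam i) - int (part mu j) - int i + int j)))"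

definition flagged_ssyt ::
  "nat list \<Rightarrow> nat list \<Rightarrow> (nat \<Rightarrow> int) \<Rightarrow> (nat \<Rightarrow> int) \<Rightarrow> (nat \<Rightarrow> nat \<Rightarrow> int) \<Rightarrow> bool" where
  "flagged_ssyt lam mu a' b' T \<longleftrightarrow>
     (\<forall>(i, j)\<in>cells lam mu. a' i \<le> T i j \<and> T i j \<le> b' i) \<and>
     (\<forall>(i, j)\<in>cells lam mu. \<forall>(i', j')\<in>cells lam mu. i = i' \<and> j \<le> j' \<longrightarrow> T i j \<le> T i' j') \<and>
     (\<forall>(i, j)\<in>cells lam mu. \<forall>(i', j')\<in>cells lam mu. j = j' \<and> i < i' \<longrightarrow> T i j < T i' j') \<and>
     (\<forall>i j. (i, j) \<notin> cells lam mu \<longrightarrow> T i j = 0)"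

(* super tableaux: entries Inl k = unprimed integer k, Inr k = primed integer k';
   extended by Inl 0 outside the diagram *)
definition super_tableaux ::
  "nat list \<Rightarrow> nat list \<Rightarrow> int \<Rightarrow> (nat \<Rightarrow> int) \<Rightarrow> (nat \<Rightarrow> int) \<Rightarrow> (nat \<Rightarrow> nat \<Rightarrow> int + int) set" where
  "super_tableaux lam mu r a' b' =
     {T. \<exists>Tt. flagged_ssyt lam mu a' b' Tt \<and>
          (\<forall>(i, j)\<in>cells lam mu.
              T i j = Inl (Tt i j) \<or> T i j = Inr (Tt i j + content lam r i j)) \<and>
          (\<forall>i j. (i, j) \<notin> cells lam mu \<longrightarrow> T i j = Inl 0)}"

fun wt_entry :: "(int \<Rightarrow> 'a::comm_ring_1) \<Rightarrow> (int \<Rightarrow> 'a) \<Rightarrow> int + int \<Rightarrow> 'a" where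
  "wt_entry y z (Inl k) = y k"
| "wt_entry y z (Inr k) = - z k"

definition wt :: "nat list \<Rightarrow> nat list \<Rightarrow> (int \<Rightarrow> 'a::comm_ring_1) \<Rightarrow> (int \<Rightarrow> 'a) \<Rightarrow> (nat \<Rightarrow> nat \<Rightarrow> int + int) \<Rightarrow> 'a" where
  "wt lam mu y z T = (\<Prod>(i, j)\<in>cells lam mu. wt_entry y z (T i j))"

end

theory Submission
  imports Defs "HOL-Computational_Algebra.Formal_Power_Series"
begin

lemma finite_msets_bounded: "finite S \<Longrightarrow> finite {M. set_mset M \<subseteq> S \<and> size M = k}"
proof -
  assume "finite S"
  have "{M. set_mset M \<subseteq> S \<and> size M = k} \<subseteq> mset ` {xs. set xs \<subseteq> S \<and> length xs = k}"
  proof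
    fix M assume "M \<in> {M. set_mset M \<subseteq> S \<and> size M = k}"
    then show "M \<in> mset ` {xs. set xs \<subseteq> S \<and> length xs = k}"
      using ex_mset[of M] by auto
  qed
  moreover have "finite {xs. set xs \<subseteq> S \<and> length xs = k}"
    using \<open>finite S\<close> by (rule finite_lists_length_eq)
  ultimately show ?thesis by (meson finite_imageI finite_subset)
qed

lemma hcomp_0[simp]: "hcomp y a b 0 = 1"
proof -
  have "{M. set_mset M \<subseteq> {a..b} \<and> size M = 0} = {{#}}" by auto
  then show ?thesis unfolding hcomp_def by simp
qed

lemma hcomp_empty: "b < a \<Longrightarrow> 0 < k \<Longrightarrow> hcomp y a b k = 0"
proof -
  assume "b < a" "0 < k"
  then have e: "{M. set_mset M \<subseteq> {a..b} \<and> size M = k} = {}" by auto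
  show ?thesis unfolding hcomp_def e by simp
qed

lemma hcomp_rec:
  assumes "a \<le> b" "0 < k"
  shows "hcomp y a b k = hcomp y a (b-1) k + y b * hcomp y a b (k-1)"
proof -
  define S where "S = (\<lambda>c k. {M. set_mset M \<subseteq> {a..c} \<and> size M = k})"
  have fin: "finite (S c k)" for c k unfolding S_def by (rule finite_msets_bounded) simp
  have sub1: "M \<in> S (b-1) k \<union> add_mset b ` S b (k-1)" if M: "M \<in> S b k" for M
  proof (cases "b \<in># M")
    case True
    then have "M = add_mset b (M - {#b#})" by simp
    moreover have "M - {#b#} \<in> S b (k-1)" using M True unfolding S_def
      by (auto dest: in_diffD simp: size_Diff_submset)
    ultimately show ?thesis by blast
  next
    case False
    have "set_mset M \<subseteq> {a..b-1}"
    proof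
      fix x assume "x \<in># M"
      then have "x \<in> {a..b}" "x \<noteq> b" using M False unfolding S_def by auto
      then show "x \<in> {a..b-1}" by auto
    qed
    then have "M \<in> S (b-1) k" using M unfolding S_def by auto
    then show ?thesis by blast
  qed
  have sub2: "M \<in> S b k" if "M \<in> S (b-1) k \<union> add_mset b ` S b (k-1)" for M
  proof -
    have sb: "{a..b-1} \<subseteq> {a..b}" by auto
    from that show ?thesis
    proof
      assume "M \<in> S (b-1) k" then show ?thesis unfolding S_def using sb by blast
    next
      assume "M \<in> add_mset b ` S b (k-1)"
      then obtain M' where "M = add_mset b M'" "set_mset M' \<subseteq> {a..b}" "size M' = k - 1"
        unfolding S_def by blast
      then show ?thesis unfolding S_def using assms by simp
    qed
  qed
  have split: "S b k = S (b-1) k \<union> add_mset b ` S b (k-1)"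
    using sub1 sub2 by blast
  have disj: "S (b-1) k \<inter> add_mset b ` S b (k-1) = {}"
  proof -
    have "b \<notin> {a..b-1}" by simp
    have False if "M \<in> S (b-1) k" "M \<in> add_mset b ` S b (k-1)" for M
    proof -
      have "b \<in># M" using that(2) by auto
      moreover have "set_mset M \<subseteq> {a..b-1}" using that(1) unfolding S_def by blast
      ultimately show False using \<open>b \<notin> {a..b-1}\<close> by blast
    qed
    then show ?thesis by blast
  qed
  have "hcomp y a b k = (\<Sum>M\<in>S b k. \<Prod>\<^sub># (image_mset y M))" unfolding hcomp_def S_def ..
  also have "\<dots> = (\<Sum>M\<in>S (b-1) k. \<Prod>\<^sub># (image_mset y M)) + (\<Sum>M\<in>add_mset b ` S b (k-1). \<Prod>\<^sub># (image_mset y M))"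
    unfolding split by (rule sum.union_disjoint) (use fin disj in auto)
  also have "(\<Sum>M\<in>add_mset b ` S b (k-1). \<Prod>\<^sub># (image_mset y M)) = (\<Sum>M\<in>S b (k-1). y b * \<Prod>\<^sub># (image_mset y M))"
    by (subst sum.reindex) (simp_all add: inj_on_def)
  finally show ?thesis unfolding hcomp_def S_def by (simp add: sum_distrib_left)
qed


lemma elem_0[simp]: "elem z a b 0 = 1"
proof -
  have "S = {}" if "S \<subseteq> {a..b}" "card S = 0" for S :: "int set"
  proof -
    have "finite S" using that(1) by (rule finite_subset) simp
    then show ?thesis using that(2) by simp
  qed
  then have e: "{S. S \<subseteq> {a..b} \<and> card S = 0} = {{}}" by auto
  show ?thesis unfolding elem_def e by simp
qed

lemma elem_small: "card {a..b} < k \<Longrightarrow> elem z a b k = 0"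
proof -
  assume "card {a..b} < k"
  then have e: "{S. S \<subseteq> {a..b} \<and> card S = k} = {}"
  proof -
    have "\<not> (S \<subseteq> {a..b} \<and> card S = k)" for S
    proof
      assume "S \<subseteq> {a..b} \<and> card S = k"
      then have "card S \<le> card {a..b}" using card_mono[of "{a..b}" S] by simp
      then show False using \<open>card {a..b} < k\<close> \<open>S \<subseteq> {a..b} \<and> card S = k\<close> by simp
    qed
    then show ?thesis by blast
  qed
  show ?thesis unfolding elem_def e by simp
qed

lemma elem_rec:
  assumes "a \<le> b" "0 < k"
  shows "elem z a b k = elem z a (b-1) k + z b * elem z a (b-1) (k-1)"
proof -
  define S where "S = (\<lambda>c k. {S. S \<subseteq> {a..c} \<and> card S = k})"
  have fin: "finite (S c k)" for c k unfolding S_def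
    by (rule finite_subset[of _ "Pow {a..c}"]) auto
  have ab: "{a..b} = insert b {a..b-1}"
    using atLeastAtMostPlus1_int_conv[of a "b-1"] assms by simp
  have bn: "b \<notin> {a..b-1}" by simp
  have sub1: "M \<in> S (b-1) k \<union> insert b ` S (b-1) (k-1)" if M: "M \<in> S b k" for M
  proof (cases "b \<in> M")
    case True
    have fM: "finite M" using M unfolding S_def by (auto intro: finite_subset)
    have "M = insert b (M - {b})" using True by blast
    moreover have "M - {b} \<subseteq> {a..b-1}" using M unfolding S_def ab by blast
    moreover have "card (M - {b}) = k - 1" using M True fM unfolding S_def by simp
    ultimately show ?thesis unfolding S_def by blast
  next
    case False
    have "M \<subseteq> {a..b-1}" using M False unfolding S_def ab by blast
    then have "M \<in> S (b-1) k" using M unfolding S_def by blast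
    then show ?thesis by blast
  qed
  have sub2: "M \<in> S b k" if "M \<in> S (b-1) k \<union> insert b ` S (b-1) (k-1)" for M
  proof -
    from that show ?thesis
    proof
      assume "M \<in> S (b-1) k" then show ?thesis unfolding S_def ab by blast
    next
      assume "M \<in> insert b ` S (b-1) (k-1)"
      then obtain M' where M': "M = insert b M'" "M' \<subseteq> {a..b-1}" "card M' = k - 1"
        unfolding S_def by blast
      have "finite M'" using M'(2) by (auto intro: finite_subset)
      moreover have "b \<notin> M'" using M'(2) bn by blast
      ultimately have "card M = k" using M' assms(2) by simp
      moreover have "M \<subseteq> {a..b}" using M' unfolding ab by blast
      ultimately show ?thesis unfolding S_def by blast
    qed
  qed
  have split: "S b k = S (b-1) k \<union> insert b ` S (b-1) (k-1)"
    using sub1 sub2 by blast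
  have disj: "S (b-1) k \<inter> insert b ` S (b-1) (k-1) = {}"
  proof -
    have False if "M \<in> S (b-1) k" "M \<in> insert b ` S (b-1) (k-1)" for M
    proof -
      have "b \<in> M" using that(2) by auto
      moreover have "M \<subseteq> {a..b-1}" using that(1) unfolding S_def by blast
      ultimately show False using bn by blast
    qed
    then show ?thesis by blast
  qed
  have inj: "inj_on (insert b) (S (b-1) (k-1))"
  proof (rule inj_onI)
    fix M N assume "M \<in> S (b-1) (k-1)" "N \<in> S (b-1) (k-1)" "insert b M = insert b N"
    moreover have "b \<notin> M" "b \<notin> N" using calculation bn unfolding S_def by blast+
    ultimately show "M = N" by (metis insert_ident)
  qed
  have "elem z a b k = (\<Sum>M\<in>S b k. \<Prod>i\<in>M. z i)" unfolding elem_def S_def ..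
  also have "\<dots> = (\<Sum>M\<in>S (b-1) k. \<Prod>i\<in>M. z i) + (\<Sum>M\<in>insert b ` S (b-1) (k-1). \<Prod>i\<in>M. z i)"
    unfolding split by (rule sum.union_disjoint) (use fin disj in auto)
  also have "(\<Sum>M\<in>insert b ` S (b-1) (k-1). \<Prod>i\<in>M. z i) = (\<Sum>M\<in>S (b-1) (k-1). z b * (\<Prod>i\<in>M. z i))"
    unfolding sum.reindex[OF inj] o_def
  proof (rule sum.cong[OF refl])
    fix M assume M: "M \<in> S (b-1) (k-1)"
    then have "finite M" "b \<notin> M" unfolding S_def using bn by (auto intro: finite_subset)
    then show "prod z (insert b M) = z b * prod z M" by simp
  qed
  finally show ?thesis unfolding elem_def S_def by (simp add: sum_distrib_left)
qed

definition hs :: "(int \<Rightarrow> 'a::comm_ring_1) \<Rightarrow> (int \<Rightarrow> 'a) \<Rightarrow> int \<Rightarrow> int \<Rightarrow> int \<Rightarrow> int \<Rightarrow> 'a fps" where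
  "hs y z lo v A B = Abs_fps (hcomp y lo v) * Abs_fps (\<lambda>k. (-1)^k * elem z A B k)"

lemma hsup_hs: "0 \<le> m \<Longrightarrow> hsup y z lo v A B m = fps_nth (hs y z lo v A B) (nat m)"
  unfolding hsup_def hs_def fps_mult_nth
  by (auto intro!: sum.cong simp: mult_ac)

lemma Hf_rec:
  assumes "lo \<le> v"
  shows "Abs_fps (hcomp y lo v) = Abs_fps (hcomp y lo (v-1)) + fps_const (y v) * (fps_X * Abs_fps (hcomp y lo v))"
proof (rule fps_ext)
  fix n show "fps_nth (Abs_fps (hcomp y lo v)) n = fps_nth (Abs_fps (hcomp y lo (v-1)) + fps_const (y v) * (fps_X * Abs_fps (hcomp y lo v))) n"
    using hcomp_rec[OF assms, of n y] by (cases n) auto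
qed

lemma Ef_rec:
  assumes "A \<le> B"
  shows "Abs_fps (\<lambda>k. (-1)^k * elem z A B k) = Abs_fps (\<lambda>k. (-1)^k * elem z A (B-1) k) - fps_const (z B) * (fps_X * Abs_fps (\<lambda>k. (-1)^k * elem z A (B-1) k))"
proof (rule fps_ext)
  fix n show "fps_nth (Abs_fps (\<lambda>k. (-1)^k * elem z A B k)) n = fps_nth (Abs_fps (\<lambda>k. (-1)^k * elem z A (B-1) k) - fps_const (z B) * (fps_X * Abs_fps (\<lambda>k. (-1)^k * elem z A (B-1) k))) n"
  proof (cases n)
    case 0 then show ?thesis by simp
  next
    case (Suc k)
    have "elem z A B n = elem z A (B-1) n + z B * elem z A (B-1) k"
      using elem_rec[OF assms, of n z] Suc by simp
    then show ?thesis using Suc by (simp add: algebra_simps)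
  qed
qed

lemma hs_rec:
  assumes "lo \<le> v" "A \<le> B" "0 < n"
  shows "fps_nth (hs y z lo v A B) n = fps_nth (hs y z lo (v-1) A (B-1)) n + (y v - z B) * fps_nth (hs y z lo v A (B-1)) (n-1)"
proof -
  define H where "H = Abs_fps (hcomp y lo v)"
  define H' where "H' = Abs_fps (hcomp y lo (v-1))"
  define E where "E = Abs_fps (\<lambda>k. (-1)^k * elem z A B k)"
  define E' where "E' = Abs_fps (\<lambda>k. (-1)^k * elem z A (B-1) k)"
  have h: "H = H' + fps_const (y v) * (fps_X * H)" unfolding H_def H'_def by (rule Hf_rec[OF assms(1)])
  have e: "E = E' - fps_const (z B) * (fps_X * E')" unfolding E_def E'_def by (rule Ef_rec[OF assms(2)])
  have "H * E = H' * E' + (fps_const (y v) - fps_const (z B)) * (fps_X * (H * E'))"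
  proof -
    define P where "P = H * E'"
    have 1: "H * E = P - fps_const (z B) * (fps_X * P)" unfolding e P_def by (simp add: algebra_simps)
    have 2: "P = H' * E' + fps_const (y v) * (fps_X * P)"
      unfolding P_def by (subst h) (simp add: algebra_simps)
    have 3: "P - fps_const (y v) * (fps_X * P) = H' * E'"
      using 2 by (metis add_diff_cancel_right')
    have "H * E = (P - fps_const (y v) * (fps_X * P)) + fps_const (y v) * (fps_X * P) - fps_const (z B) * (fps_X * P)"
      using 1 by simp
    also have "\<dots> = H' * E' + (fps_const (y v) - fps_const (z B)) * (fps_X * P)"
      unfolding 3 left_diff_distrib by (simp del: fps_const_sub)
    finally show ?thesis unfolding P_def .
  qed
  then have "fps_nth (H * E) n = fps_nth (H' * E') n + fps_nth (fps_const (y v - z B) * (fps_X * (H * E'))) n"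
    by simp
  also have "fps_nth (fps_const (y v - z B) * (fps_X * (H * E'))) n = (y v - z B) * fps_nth (H * E') (n-1)"
    using assms(3) by (simp only: fps_mult_left_const_nth fps_X_mult_nth) simp
  finally have "fps_nth (H * E) n = fps_nth (H' * E') n + (y v - z B) * fps_nth (H * E') (n-1)" .
  then show ?thesis unfolding hs_def H_def H'_def E_def E'_def .
qed

lemma hsup_rec:
  assumes "lo \<le> v" "A \<le> B" "0 < m"
  shows "hsup y z lo v A B m = hsup y z lo (v-1) A (B-1) m + (y v - z B) * hsup y z lo v A (B-1) (m-1)"
proof -
  have "nat (m-1) = nat m - 1" using assms by simp
  then show ?thesis using assms hs_rec[OF assms(1,2), of "nat m" y z]
    by (simp add: hsup_hs)
qed

lemma hsup_0[simp]: "hsup y z lo v A B 0 = 1"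
  unfolding hsup_def by simp

lemma hsup_neg: "m < 0 \<Longrightarrow> hsup y z lo v A B m = 0"
  unfolding hsup_def by simp

lemma hsup_emptyy:
  assumes "v < lo" "0 < m" "B - A + 1 < m"
  shows "hsup y z lo v A B m = 0"
proof -
  have "(-1) ^ (nat m - i) * hcomp y lo v i * elem z A B (nat m - i) = 0" if "i \<in> {0..nat m}" for i
  proof (cases "i = 0")
    case True
    have "card {A..B} < nat m - i" using assms True by simp
    then show ?thesis by (simp add: elem_small)
  next
    case False then show ?thesis using assms by (simp add: hcomp_empty)
  qed
  then show ?thesis unfolding hsup_def using assms by simp
qed

lemma hsup_tele:
  assumes "0 < m" "lo - 1 \<le> hi"
  shows "hsup y z lo hi (lo + D - m + 1) (hi + D) m =
    (\<Sum>v\<in>{lo..hi}. hsup y z lo v (lo + D - m + 1) (v + D - 1) (m-1) * (y v - z (v + D)))"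
  using assms(2)
proof (induction hi rule: int_ge_induct)
  case base
  have "hsup y z lo (lo - 1) (lo + D - m + 1) (lo - 1 + D) m = 0"
    by (rule hsup_emptyy) (use assms in auto)
  then show ?case by simp
next
  case (step i)
  have iv: "{lo..i+1} = insert (i+1) {lo..i}" using atLeastAtMostPlus1_int_conv[of lo i] step by (simp add: add.commute)
  have "hsup y z lo (i+1) (lo + D - m + 1) (i + 1 + D) m =
        hsup y z lo (i+1-1) (lo + D - m + 1) (i + 1 + D - 1) m + (y (i+1) - z (i+1+D)) * hsup y z lo (i+1) (lo + D - m + 1) (i+1+D-1) (m-1)"
    by (rule hsup_rec) (use assms step in auto)
  also have "\<dots> = hsup y z lo i (lo + D - m + 1) (i + D) m + (y (i+1) - z (i+1+D)) * hsup y z lo (i+1) (lo + D - m + 1) (i+1+D-1) (m-1)"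
    by (simp add: algebra_simps)
  also have "\<dots> = (\<Sum>v\<in>{lo..i+1}. hsup y z lo v (lo + D - m + 1) (v + D - 1) (m-1) * (y v - z (v + D)))"
    unfolding step.IH iv by (simp add: algebra_simps)
  finally show ?case by (simp add: algebra_simps)
qed

definition cw :: "(int \<Rightarrow> 'a::comm_ring_1) \<Rightarrow> (int \<Rightarrow> 'a) \<Rightarrow> int \<Rightarrow> int \<Rightarrow> int \<times> bool \<Rightarrow> 'a" where
  "cw y z c0 x e = (if snd e then - z (fst e + x + c0) else y (fst e))"

definition rowpaths :: "int \<Rightarrow> int \<Rightarrow> int \<Rightarrow> int \<Rightarrow> (int \<Rightarrow> int \<times> bool) set" where
  "rowpaths lo hi p q = {f \<in> PiE {p..q} (\<lambda>_. {lo..hi} \<times> UNIV).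
      \<forall>x\<in>{p..q}. \<forall>x'\<in>{p..q}. x \<le> x' \<longrightarrow> fst (f x) \<le> fst (f x')}"

lemma finite_rowpaths: "finite (rowpaths lo hi p q)"
proof -
  have "finite (PiE {p..q} (\<lambda>_. {lo..hi} \<times> (UNIV :: bool set)))"
    by (rule finite_PiE) auto
  then show ?thesis unfolding rowpaths_def by simp
qed

lemma rowpaths_split:
  assumes "p - 1 \<le> q"
  shows "rowpaths lo hi p (q+1) = (\<lambda>((v,b),g). g(q+1 := (v,b))) ` (SIGMA vb:{lo..hi} \<times> UNIV. rowpaths lo (fst vb) p q)"
    (is "?L = ?R")
proof
  show "?L \<subseteq> ?R"
  proof
    fix f assume f: "f \<in> ?L"
    define g where "g = f(q+1 := undefined)"
    have "q+1 \<in> {p..q+1}" using assms by simp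
    then have fq: "f (q+1) \<in> {lo..hi} \<times> UNIV" using f unfolding rowpaths_def by (auto simp: PiE_iff)
    have "g \<in> rowpaths lo (fst (f (q+1))) p q"
      unfolding rowpaths_def
    proof (intro CollectI conjI ballI impI)
      show "g \<in> PiE {p..q} (\<lambda>_. {lo..fst (f (q+1))} \<times> UNIV)"
      proof (rule PiE_I)
        fix x assume x: "x \<in> {p..q}"
        then have "fst (f x) \<le> fst (f (q+1))" using f assms unfolding rowpaths_def by auto
        moreover have "f x \<in> {lo..hi} \<times> UNIV" using f x unfolding rowpaths_def by (auto simp: PiE_iff)
        ultimately show "g x \<in> {lo..fst (f (q+1))} \<times> UNIV" using x unfolding g_def by auto
      next
        fix x assume "x \<notin> {p..q}"
        then show "g x = undefined" using f unfolding g_def rowpaths_def by (auto simp: PiE_def extensional_def)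
      qed
      fix x x' assume "x \<in> {p..q}" "x' \<in> {p..q}" "x \<le> x'"
      then show "fst (g x) \<le> fst (g x')" using f unfolding g_def rowpaths_def by auto
    qed
    moreover have "f = g(q+1 := (fst (f (q+1)), snd (f (q+1))))" unfolding g_def by simp
    ultimately show "f \<in> ?R" using fq by (intro image_eqI[of _ _ "((fst (f (q+1)), snd (f (q+1))), g)"]) auto
  qed
next
  show "?R \<subseteq> ?L"
  proof
    fix f assume "f \<in> ?R"
    then obtain v b g where vb: "v \<in> {lo..hi}" and g: "g \<in> rowpaths lo v p q" and f: "f = g(q+1 := (v,b))"
      by auto
    show "f \<in> ?L" unfolding rowpaths_def
    proof (intro CollectI conjI ballI impI)
      show "f \<in> PiE {p..q+1} (\<lambda>_. {lo..hi} \<times> UNIV)"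
      proof (rule PiE_I)
        fix x assume x: "x \<in> {p..q+1}"
        show "f x \<in> {lo..hi} \<times> UNIV"
        proof (cases "x = q+1")
          case True then show ?thesis using f vb by simp
        next
          case False
          then have "x \<in> {p..q}" using x by auto
          then have "g x \<in> {lo..v} \<times> UNIV" using g unfolding rowpaths_def by (auto simp: PiE_iff)
          then show ?thesis using f False vb by auto
        qed
      next
        fix x assume "x \<notin> {p..q+1}"
        then show "f x = undefined" using f g assms unfolding rowpaths_def by (auto simp: PiE_def extensional_def)
      qed
      fix x x' assume x: "x \<in> {p..q+1}" "x' \<in> {p..q+1}" "x \<le> x'"
      show "fst (f x) \<le> fst (f x')"
      proof (cases "x' = q+1")
        case True
        show ?thesis
        proof (cases "x = q+1")
          case False
          then have "x \<in> {p..q}" using x by auto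
          then have "g x \<in> {lo..v} \<times> UNIV" using g unfolding rowpaths_def by (auto simp: PiE_iff)
          then show ?thesis using f True False by auto
        qed (use f True in auto)
      next
        case False
        then have "x' \<in> {p..q}" "x \<in> {p..q}" using x by auto
        then show ?thesis using f g x(3) False unfolding rowpaths_def by auto
      qed
    qed
  qed
qed

lemma rowpaths_split_inj:
  "inj_on (\<lambda>((v,b),g). g(q+1 := (v,b))) (SIGMA vb:{lo..hi} \<times> UNIV. rowpaths lo (fst vb) p q)"
proof (rule inj_onI)
  fix u w assume u: "u \<in> (SIGMA vb:{lo..hi} \<times> UNIV. rowpaths lo (fst vb) p q)"
    and w: "w \<in> (SIGMA vb:{lo..hi} \<times> UNIV. rowpaths lo (fst vb) p q)"
    and e: "(\<lambda>((v,b),g). g(q+1 := (v,b))) u = (\<lambda>((v,b),g). g(q+1 := (v,b))) w"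
  obtain v b g where u': "u = ((v,b),g)" and g: "g \<in> rowpaths lo v p q" using u by auto
  obtain v' b' g' where w': "w = ((v',b'),g')" and g': "g' \<in> rowpaths lo v' p q" using w by auto
  have e': "g(q+1 := (v,b)) = g'(q+1 := (v',b'))" using e u' w' by simp
  then have "(v,b) = (v',b')" by (metis fun_upd_same)
  moreover have "g = g'"
  proof
    fix x show "g x = g' x"
    proof (cases "x = q+1")
      case True
      then have "x \<notin> {p..q}" by auto
      then show ?thesis using g g' unfolding rowpaths_def by (auto simp: PiE_def extensional_def)
    next
      case False then show ?thesis using e' by (metis fun_upd_other)
    qed
  qed
  ultimately show "u = w" using u' w' by simp
qed

lemma row_lemma:
  assumes "p - 1 \<le> q"
  shows "(\<Sum>f\<in>rowpaths lo hi p q. \<Prod>x\<in>{p..q}. cw y z c0 x (f x)) =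
         hsup y z lo hi (lo + p + c0) (hi + q + c0) (q - p + 1)"
  using assms
proof (induction q arbitrary: hi rule: int_ge_induct)
  case base
  have "rowpaths lo hi p (p - 1) = {\<lambda>_. undefined}" unfolding rowpaths_def by auto
  then show ?case by simp
next
  case (step q)
  let ?S = "SIGMA vb:{lo..hi} \<times> (UNIV :: bool set). rowpaths lo (fst vb) p q"
  have pq: "{p..q+1} = insert (q+1) {p..q}" using atLeastAtMostPlus1_int_conv[of p q] step by (simp add: add.commute)
  have "(\<Sum>f\<in>rowpaths lo hi p (q+1). \<Prod>x\<in>{p..q+1}. cw y z c0 x (f x)) =
        (\<Sum>u\<in>?S. \<Prod>x\<in>{p..q+1}. cw y z c0 x ((\<lambda>((v,b),g). g(q+1 := (v,b))) u x))"
    unfolding rowpaths_split[OF step(1)] by (subst sum.reindex[OF rowpaths_split_inj]) (simp add: o_def)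
  also have "\<dots> = (\<Sum>u\<in>?S. cw y z c0 (q+1) (fst u) * (\<Prod>x\<in>{p..q}. cw y z c0 x (snd u x)))"
  proof (rule sum.cong[OF refl])
    fix u assume "u \<in> ?S"
    obtain v b g where u: "u = ((v,b),g)" by (metis prod.collapse)
    have "(\<Prod>x\<in>{p..q+1}. cw y z c0 x ((\<lambda>((v,b),g). g(q+1 := (v,b))) u x)) =
          cw y z c0 (q+1) (v,b) * (\<Prod>x\<in>{p..q}. cw y z c0 x ((g(q+1 := (v,b))) x))"
      unfolding pq u by (subst prod.insert) auto
    also have "(\<Prod>x\<in>{p..q}. cw y z c0 x ((g(q+1 := (v,b))) x)) = (\<Prod>x\<in>{p..q}. cw y z c0 x (g x))"
      by (rule prod.cong) auto
    finally show "(\<Prod>x\<in>{p..q+1}. cw y z c0 x ((\<lambda>((v,b),g). g(q+1 := (v,b))) u x)) =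
        cw y z c0 (q+1) (fst u) * (\<Prod>x\<in>{p..q}. cw y z c0 x (snd u x))" using u by simp
  qed
  also have "\<dots> = (\<Sum>vb\<in>{lo..hi} \<times> (UNIV :: bool set). cw y z c0 (q+1) vb * (\<Sum>g\<in>rowpaths lo (fst vb) p q. \<Prod>x\<in>{p..q}. cw y z c0 x (g x)))"
  proof -
    have "(\<Sum>vb\<in>{lo..hi} \<times> (UNIV :: bool set). \<Sum>g\<in>rowpaths lo (fst vb) p q. cw y z c0 (q+1) vb * (\<Prod>x\<in>{p..q}. cw y z c0 x (g x)))
        = (\<Sum>u\<in>?S. cw y z c0 (q+1) (fst u) * (\<Prod>x\<in>{p..q}. cw y z c0 x (snd u x)))"
      by (subst sum.Sigma) (auto simp: finite_rowpaths split_def)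
    then show ?thesis by (simp add: sum_distrib_left)
  qed
  also have "\<dots> = (\<Sum>vb\<in>{lo..hi} \<times> (UNIV :: bool set). cw y z c0 (q+1) vb * hsup y z lo (fst vb) (lo + p + c0) (fst vb + q + c0) (q - p + 1))"
    using step.IH by simp
  also have "\<dots> = (\<Sum>v\<in>{lo..hi}. \<Sum>b\<in>(UNIV :: bool set). cw y z c0 (q+1) (v,b) * hsup y z lo v (lo + p + c0) (v + q + c0) (q - p + 1))"
    by (subst sum.cartesian_product) (simp add: split_def)
  also have "\<dots> = (\<Sum>v\<in>{lo..hi}. hsup y z lo v (lo + p + c0) (v + q + c0) (q - p + 1) * (y v - z (v + (q + 1 + c0))))"
    by (rule sum.cong[OF refl]) (simp add: UNIV_bool cw_def algebra_simps)
  also have "\<dots> = hsup y z lo hi (lo + (q + 1 + c0) - (q + 1 - p + 1) + 1) (hi + (q + 1 + c0)) (q + 1 - p + 1)"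
  proof (cases "lo - 1 \<le> hi")
    case True
    show ?thesis
      by (subst hsup_tele[OF _ True]) (use step in \<open>auto simp: algebra_simps intro!: sum.cong\<close>)
  next
    case False
    then have "{lo..hi} = {}" by auto
    moreover have "hsup y z lo hi (lo + (q + 1 + c0) - (q + 1 - p + 1) + 1) (hi + (q + 1 + c0)) (q + 1 - p + 1) = 0"
      by (rule hsup_emptyy) (use False step in auto)
    ultimately show ?thesis by simp
  qed
  finally show ?case by (simp add: algebra_simps)
qed

locale lgv =
  fixes n :: nat and P Q \<alpha> \<beta> :: "nat \<Rightarrow> int"
  assumes Pdec: "\<And>m. P (Suc m) \<le> P m - 1"
      and Qdec: "\<And>m. Q (Suc m) \<le> Q m - 1"
      and PQ: "\<And>m. P m - 1 \<le> Q m"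
      and flags: "\<And>m. Suc m < n \<Longrightarrow> P m - 1 \<le> Q (Suc m) \<Longrightarrow> \<alpha> m \<le> \<alpha> (Suc m) \<and> \<beta> m \<le> \<beta> (Suc m)"
begin

definition paths :: "nat \<Rightarrow> nat \<Rightarrow> (int \<Rightarrow> int \<times> bool) set" where
  "paths j i = (if P j - 1 \<le> Q i then rowpaths (\<alpha> j) (\<beta> i) (P j) (Q i) else {})"

definition ht :: "nat \<Rightarrow> nat \<Rightarrow> (int \<Rightarrow> int \<times> bool) \<Rightarrow> int \<Rightarrow> int" where
  "ht j i f x = (if x < P j then \<alpha> j else if Q i < x then \<beta> i else fst (f x))"

definition V :: "nat \<Rightarrow> nat \<Rightarrow> (int \<Rightarrow> int \<times> bool) \<Rightarrow> (int \<times> int) set" where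
  "V j i f = {(x,h). P j - 1 \<le> x \<and> x \<le> Q i \<and> ht j i f x \<le> h \<and> h \<le> ht j i f (x+1)}"

definition htmono :: "nat \<Rightarrow> nat \<Rightarrow> (int \<Rightarrow> int \<times> bool) \<Rightarrow> bool" where
  "htmono j i f \<longleftrightarrow> (\<forall>x1 x2. P j - 1 \<le> x1 \<longrightarrow> x1 \<le> x2 \<longrightarrow> x2 \<le> Q i + 1 \<longrightarrow> ht j i f x1 \<le> ht j i f x2)"

definition comb :: "int \<Rightarrow> (int \<Rightarrow> int \<times> bool) \<Rightarrow> (int \<Rightarrow> int \<times> bool) \<Rightarrow> int \<Rightarrow> int \<times> bool" where
  "comb x0 f g = (\<lambda>x. if x \<le> x0 then f x else g x)"

lemma Pdec': "j \<le> j' \<Longrightarrow> P j' \<le> P j - int (j' - j)"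
proof (induction j' rule: dec_induct)
  case base then show ?case by simp
next
  case (step k) then show ?case using Pdec[of k] by (simp add: Suc_diff_le)
qed

lemma Qdec': "j \<le> j' \<Longrightarrow> Q j' \<le> Q j - int (j' - j)"
proof (induction j' rule: dec_induct)
  case base then show ?case by simp
next
  case (step k) then show ?case using Qdec[of k] by (simp add: Suc_diff_le)
qed

lemma Plt: "j < j' \<Longrightarrow> P j' < P j" using Pdec'[of j j'] by simp
lemma Qlt: "j < j' \<Longrightarrow> Q j' < Q j" using Qdec'[of j j'] by simp

lemma paths_PiE: "f \<in> paths j i \<Longrightarrow> f \<in> PiE {P j..Q i} (\<lambda>_. {\<alpha> j..\<beta> i} \<times> UNIV)"
  unfolding paths_def rowpaths_def by (auto split: if_splits)

lemma paths_range: "f \<in> paths j i \<Longrightarrow> P j - 1 \<le> Q i"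
  unfolding paths_def by (auto split: if_splits)

lemma paths_undef: "f \<in> paths j i \<Longrightarrow> x \<notin> {P j..Q i} \<Longrightarrow> f x = undefined"
  using paths_PiE by (auto simp: PiE_def extensional_def)

lemma paths_val:
  assumes "f \<in> paths j i" "P j \<le> x" "x \<le> Q i"
  shows "\<alpha> j \<le> fst (f x) \<and> fst (f x) \<le> \<beta> i"
proof -
  have "x \<in> {P j..Q i}" using assms by simp
  then have "f x \<in> {\<alpha> j..\<beta> i} \<times> UNIV" using paths_PiE[OF assms(1)] by (auto simp: PiE_iff)
  then show ?thesis by (cases "f x") auto
qed

lemma paths_mono: "f \<in> paths j i \<Longrightarrow> P j \<le> x \<Longrightarrow> x \<le> x' \<Longrightarrow> x' \<le> Q i \<Longrightarrow> fst (f x) \<le> fst (f x')"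
  unfolding paths_def rowpaths_def by (auto split: if_splits)

lemma finite_paths: "finite (paths j i)"
  unfolding paths_def using finite_rowpaths by auto

lemma htmono_long:
  assumes f: "f \<in> paths j i" and l: "P j \<le> Q i"
  shows "htmono j i f"
  unfolding htmono_def
proof (intro allI impI)
  fix x1 x2 assume x: "P j - 1 \<le> x1" "x1 \<le> x2" "x2 \<le> Q i + 1"
  show "ht j i f x1 \<le> ht j i f x2"
  proof (cases "x1 < P j")
    case True
    then have h1: "ht j i f x1 = \<alpha> j" unfolding ht_def by simp
    show ?thesis
    proof (cases "x2 < P j")
      case True then show ?thesis using h1 unfolding ht_def by simp
    next
      case False
      show ?thesis
      proof (cases "Q i < x2")
        case True then have "ht j i f x2 = \<beta> i" using False unfolding ht_def by simp
        moreover have "\<alpha> j \<le> \<beta> i" using paths_val[OF f l order.refl] by simp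
        ultimately show ?thesis using h1 by simp
      next
        case c: False
        then have "ht j i f x2 = fst (f x2)" using False unfolding ht_def by simp
        then show ?thesis using h1 paths_val[OF f, of x2] False c by simp
      qed
    qed
  next
    case False
    show ?thesis
    proof (cases "Q i < x1")
      case True
      then show ?thesis using x unfolding ht_def by auto
    next
      case c1: False
      then have h1: "ht j i f x1 = fst (f x1)" using False unfolding ht_def by simp
      show ?thesis
      proof (cases "Q i < x2")
        case True then show ?thesis using h1 paths_val[OF f, of x1] False c1 x unfolding ht_def by simp
      next
        case c2: False
        then show ?thesis using h1 paths_mono[OF f, of x1 x2] False c1 x unfolding ht_def by simp
      qed
    qed
  qed
qed

lemma htmono_V:
  assumes f: "f \<in> paths j i" and v: "V j i f \<noteq> {}"
  shows "htmono j i f"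
proof (cases "P j \<le> Q i")
  case True then show ?thesis using htmono_long[OF f] by simp
next
  case False
  then have e: "Q i = P j - 1" using paths_range[OF f] by simp
  obtain x h where "(x,h) \<in> V j i f" using v by auto
  then have "x = Q i" "ht j i f x \<le> h" "h \<le> ht j i f (x+1)" unfolding V_def using e by auto
  then have ab: "\<alpha> j \<le> \<beta> i" unfolding ht_def using e by (auto split: if_splits)
  show ?thesis unfolding htmono_def
  proof (intro allI impI)
    fix x1 x2 assume x: "P j - 1 \<le> x1" "x1 \<le> x2" "x2 \<le> Q i + 1"
    then consider "x1 = Q i" "x2 = Q i" | "x1 = Q i" "x2 = Q i + 1" | "x1 = Q i + 1" "x2 = Q i + 1"
      using e by linarith
    then show "ht j i f x1 \<le> ht j i f x2"
      by cases (use e ab in \<open>auto simp: ht_def\<close>)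
  qed
qed

lemma ht_start: "ht j i f (P j - 1) = \<alpha> j" unfolding ht_def by simp
lemma ht_end: "P j - 1 \<le> Q i \<Longrightarrow> ht j i f (Q i + 1) = \<beta> i" unfolding ht_def by simp

lemma htmono_paths:
  assumes ext: "\<And>x. x \<notin> {P j..Q i} \<Longrightarrow> f x = undefined"
    and r: "P j - 1 \<le> Q i" and m: "htmono j i f"
  shows "f \<in> paths j i"
proof -
  have val: "\<alpha> j \<le> fst (f x) \<and> fst (f x) \<le> \<beta> i" if "x \<in> {P j..Q i}" for x
  proof -
    have "ht j i f (P j - 1) \<le> ht j i f x" "ht j i f x \<le> ht j i f (Q i + 1)"
      using m that unfolding htmono_def by auto
    moreover have "ht j i f x = fst (f x)" using that unfolding ht_def by auto
    ultimately show ?thesis using ht_start[of j i f] ht_end[OF r, of f] by simp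
  qed
  have "f \<in> PiE {P j..Q i} (\<lambda>_. {\<alpha> j..\<beta> i} \<times> UNIV)"
  proof (rule PiE_I)
    fix x assume "x \<in> {P j..Q i}" then show "f x \<in> {\<alpha> j..\<beta> i} \<times> UNIV"
      using val[of x] by (cases "f x") auto
  qed (use ext in auto)
  moreover have "fst (f x) \<le> fst (f x')" if "x \<in> {P j..Q i}" "x' \<in> {P j..Q i}" "x \<le> x'" for x x'
  proof -
    have "ht j i f x \<le> ht j i f x'" using m that unfolding htmono_def by auto
    then show ?thesis using that unfolding ht_def by auto
  qed
  ultimately show ?thesis unfolding paths_def rowpaths_def using r by auto
qed

lemma comb_ht:
  assumes f: "f \<in> paths a b" and g: "g \<in> paths c d"
    and x0: "P a - 1 \<le> x0" "x0 \<le> Q b" "P c - 1 \<le> x0" "x0 \<le> Q d"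
  shows "ht a d (comb x0 f g) x = (if x \<le> x0 then ht a b f x else ht c d g x)"
proof (cases "x \<le> x0")
  case True
  then show ?thesis using x0 unfolding ht_def comb_def by auto
next
  case False
  then show ?thesis using x0 unfolding ht_def comb_def by auto
qed

lemma comb_paths:
  assumes f: "f \<in> paths a b" and g: "g \<in> paths c d"
    and vf: "(x0,h) \<in> V a b f" and vg: "(x0,h) \<in> V c d g"
  shows "comb x0 f g \<in> paths a d" "htmono a d (comb x0 f g)"
proof -
  have x0: "P a - 1 \<le> x0" "x0 \<le> Q b" "P c - 1 \<le> x0" "x0 \<le> Q d"
    using vf vg unfolding V_def by auto
  have mf: "htmono a b f" using htmono_V[OF f] vf by auto
  have mg: "htmono c d g" using htmono_V[OF g] vg by auto
  have hf: "ht a b f x0 \<le> h" and hg: "h \<le> ht c d g (x0+1)" using vf vg unfolding V_def by auto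
  have r: "P a - 1 \<le> Q d" using x0 by simp
  have e: "ht a d (comb x0 f g) x = (if x \<le> x0 then ht a b f x else ht c d g x)" for x
    by (rule comb_ht[OF f g x0])
  show m: "htmono a d (comb x0 f g)" unfolding htmono_def
  proof (intro allI impI)
    fix x1 x2 assume x: "P a - 1 \<le> x1" "x1 \<le> x2" "x2 \<le> Q d + 1"
    show "ht a d (comb x0 f g) x1 \<le> ht a d (comb x0 f g) x2"
    proof (cases "x2 \<le> x0")
      case True
      then show ?thesis using mf x x0 unfolding e htmono_def by auto
    next
      case False
      show ?thesis
      proof (cases "x1 \<le> x0")
        case True
        have "ht a b f x1 \<le> ht a b f x0" using mf x True x0 unfolding htmono_def by auto
        moreover have "ht c d g (x0+1) \<le> ht c d g x2" using mg x False x0 unfolding htmono_def by auto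
        ultimately show ?thesis using True False hf hg unfolding e by simp
      next
        case c: False
        then show ?thesis using mg x x0 False unfolding e htmono_def by auto
      qed
    qed
  qed
  show "comb x0 f g \<in> paths a d"
  proof (rule htmono_paths[OF _ r m])
    fix x assume "x \<notin> {P a..Q d}"
    then show "comb x0 f g x = undefined"
      using paths_undef[OF f, of x] paths_undef[OF g, of x] x0 unfolding comb_def by auto
  qed
qed

end

context lgv begin

lemma V_at:
  assumes "P j - 1 \<le> x" "x \<le> Q i"
  shows "(x,h) \<in> V j i f \<longleftrightarrow> ht j i f x \<le> h \<and> h \<le> ht j i f (x+1)"
  using assms unfolding V_def by auto

lemma V_range: "(x,h) \<in> V j i f \<Longrightarrow> P j - 1 \<le> x \<and> x \<le> Q i"
  unfolding V_def by auto

lemma comb_V: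
  assumes f: "f \<in> paths a b" and g: "g \<in> paths c d"
    and vf: "(x0,h) \<in> V a b f" and vg: "(x0,h) \<in> V c d g"
  shows "x < x0 \<Longrightarrow> (x,h') \<in> V a d (comb x0 f g) \<longleftrightarrow> (x,h') \<in> V a b f"
    and "x0 < x \<Longrightarrow> (x,h') \<in> V a d (comb x0 f g) \<longleftrightarrow> (x,h') \<in> V c d g"
    and "(x0,h') \<in> V a d (comb x0 f g) \<longleftrightarrow> ht a b f x0 \<le> h' \<and> h' \<le> ht c d g (x0+1)"
proof -
  have x0: "P a - 1 \<le> x0" "x0 \<le> Q b" "P c - 1 \<le> x0" "x0 \<le> Q d"
    using vf vg unfolding V_def by auto
  have e: "ht a d (comb x0 f g) x = (if x \<le> x0 then ht a b f x else ht c d g x)" for x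
    by (rule comb_ht[OF f g x0])
  show "x < x0 \<Longrightarrow> (x,h') \<in> V a d (comb x0 f g) \<longleftrightarrow> (x,h') \<in> V a b f"
    using x0 unfolding V_def e by auto
  show "x0 < x \<Longrightarrow> (x,h') \<in> V a d (comb x0 f g) \<longleftrightarrow> (x,h') \<in> V c d g"
    using x0 unfolding V_def e by auto
  show "(x0,h') \<in> V a d (comb x0 f g) \<longleftrightarrow> ht a b f x0 \<le> h' \<and> h' \<le> ht c d g (x0+1)"
    using x0 unfolding V_def e by auto
qed

definition ind :: "int \<times> int \<Rightarrow> (int \<times> int) set \<Rightarrow> nat" where
  "ind w S = (if w \<in> S then 1 else 0)"

lemma swap_count:
  assumes f: "f \<in> paths a b" and g: "g \<in> paths c d"
    and vf: "(x0,h) \<in> V a b f" and vg: "(x0,h) \<in> V c d g"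
  shows "ind w (V a d (comb x0 f g)) + ind w (V c b (comb x0 g f)) = ind w (V a b f) + ind w (V c d g)"
proof -
  obtain x h' where w: "w = (x,h')" by (cases w)
  have x0: "P a - 1 \<le> x0" "x0 \<le> Q b" "P c - 1 \<le> x0" "x0 \<le> Q d"
    using vf vg unfolding V_def by auto
  have hf: "ht a b f x0 \<le> h" "h \<le> ht a b f (x0+1)" using vf unfolding V_def by auto
  have hg: "ht c d g x0 \<le> h" "h \<le> ht c d g (x0+1)" using vg unfolding V_def by auto
  consider "x < x0" | "x0 < x" | "x = x0" by linarith
  then show ?thesis
  proof cases
    case 1
    then show ?thesis unfolding w ind_def using comb_V(1)[OF f g vf vg 1] comb_V(1)[OF g f vg vf 1] by auto
  next
    case 2
    then show ?thesis unfolding w ind_def using comb_V(2)[OF f g vf vg 2] comb_V(2)[OF g f vg vf 2] by auto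
  next
    case 3
    have A: "(x0,h') \<in> V a b f \<longleftrightarrow> ht a b f x0 \<le> h' \<and> h' \<le> ht a b f (x0+1)" using x0 by (intro V_at) auto
    have B: "(x0,h') \<in> V c d g \<longleftrightarrow> ht c d g x0 \<le> h' \<and> h' \<le> ht c d g (x0+1)" using x0 by (intro V_at) auto
    show ?thesis unfolding w ind_def 3 comb_V(3)[OF f g vf vg] comb_V(3)[OF g f vg vf] A B
      using hf hg by auto
  qed
qed

definition pw :: "(int \<Rightarrow> 'a::comm_ring_1) \<Rightarrow> (int \<Rightarrow> 'a) \<Rightarrow> int \<Rightarrow> nat \<Rightarrow> nat \<Rightarrow> (int \<Rightarrow> int \<times> bool) \<Rightarrow> 'a" where
  "pw y z c0 j i f = (\<Prod>x\<in>{P j..Q i}. cw y z c0 x (f x))"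

lemma prod_split_ivl:
  fixes h :: "int \<Rightarrow> 'a::comm_monoid_mult"
  assumes "p - 1 \<le> x0" "x0 \<le> q"
  shows "(\<Prod>x\<in>{p..q}. h x) = (\<Prod>x\<in>{p..x0}. h x) * (\<Prod>x\<in>{x0+1..q}. h x)"
proof -
  have "{p..q} = {p..x0} \<union> {x0+1..q}" using assms by auto
  moreover have "{p..x0} \<inter> {x0+1..q} = {}" by auto
  ultimately show ?thesis by (simp add: prod.union_disjoint)
qed

lemma comb_weight:
  assumes x0: "P a - 1 \<le> x0" "x0 \<le> Q b" "P c - 1 \<le> x0" "x0 \<le> Q d"
  shows "pw y z c0 a d (comb x0 f g) * pw y z c0 c b (comb x0 g f) = pw y z c0 a b f * pw y z c0 c d g"
proof -
  have 1: "pw y z c0 a d (comb x0 f g) = (\<Prod>x\<in>{P a..x0}. cw y z c0 x (f x)) * (\<Prod>x\<in>{x0+1..Q d}. cw y z c0 x (g x))"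
    unfolding pw_def prod_split_ivl[of "P a" x0 "Q d", OF x0(1,4)] comb_def by (intro arg_cong2[where f="(*)"] prod.cong) auto
  have 2: "pw y z c0 c b (comb x0 g f) = (\<Prod>x\<in>{P c..x0}. cw y z c0 x (g x)) * (\<Prod>x\<in>{x0+1..Q b}. cw y z c0 x (f x))"
    unfolding pw_def prod_split_ivl[of "P c" x0 "Q b", OF x0(3,2)] comb_def by (intro arg_cong2[where f="(*)"] prod.cong) auto
  have 3: "pw y z c0 a b f = (\<Prod>x\<in>{P a..x0}. cw y z c0 x (f x)) * (\<Prod>x\<in>{x0+1..Q b}. cw y z c0 x (f x))"
    unfolding pw_def by (rule prod_split_ivl[OF x0(1,2)])
  have 4: "pw y z c0 c d g = (\<Prod>x\<in>{P c..x0}. cw y z c0 x (g x)) * (\<Prod>x\<in>{x0+1..Q d}. cw y z c0 x (g x))"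
    unfolding pw_def by (rule prod_split_ivl[OF x0(3,4)])
  show ?thesis unfolding 1 2 3 4 by (simp add: ac_simps)
qed

lemma comb_comb: "comb x0 (comb x0 f g) (comb x0 g f) = f"
  unfolding comb_def by auto

end

lemma involution_cancel:
  fixes f :: "'b \<Rightarrow> 'a::ab_group_add"
  assumes "finite S" "\<And>x. x \<in> S \<Longrightarrow> g x \<in> S" "\<And>x. x \<in> S \<Longrightarrow> g (g x) = x"
    "\<And>x. x \<in> S \<Longrightarrow> g x \<noteq> x" "\<And>x. x \<in> S \<Longrightarrow> f (g x) = - f x"
  shows "sum f S = 0"
  using assms
proof (induction S rule: finite_psubset_induct)
  case (psubset S)
  show ?case
  proof (cases "S = {}")
    case True then show ?thesis by simp
  next
    case False
    then obtain x where x: "x \<in> S" by auto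
    define S' where "S' = S - {x, g x}"
    have gx: "g x \<in> S" "g x \<noteq> x" using psubset.prems x by auto
    have sub: "S' \<subset> S" unfolding S'_def using x by auto
    have "sum f S' = 0"
    proof (rule psubset.IH[OF sub])
      fix y assume y: "y \<in> S'"
      then have yS: "y \<in> S" "y \<noteq> x" "y \<noteq> g x" unfolding S'_def by auto
      show "g y \<in> S'"
      proof -
        have "g y \<in> S" using psubset.prems yS by auto
        moreover have "g y \<noteq> x" using yS psubset.prems(2) by (metis x)
        moreover have "g y \<noteq> g x" using yS psubset.prems(2) x by metis
        ultimately show ?thesis unfolding S'_def by auto
      qed
      show "g (g y) = y" "g y \<noteq> y" "f (g y) = - f y" using psubset.prems yS by auto
    qed
    moreover have "sum f S = f x + f (g x) + sum f S'"
    proof -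
      have "sum f S = f x + sum f (S - {x})" using x psubset.hyps by (simp add: sum.remove)
      also have "sum f (S - {x}) = f (g x) + sum f (S - {x} - {g x})"
        using gx psubset.hyps by (subst sum.remove[of _ "g x"]) auto
      finally show ?thesis unfolding S'_def by (simp add: set_diff_eq add.assoc)
    qed
    ultimately show ?thesis using psubset.prems x by simp
  qed
qed

lemma sum_change2:
  fixes g g' :: "'b \<Rightarrow> 'a::comm_monoid_add"
  assumes "finite A" "i \<in> A" "j \<in> A" "i \<noteq> j" "\<And>k. k \<in> A \<Longrightarrow> k \<noteq> i \<Longrightarrow> k \<noteq> j \<Longrightarrow> g' k = g k"
    "g' i + g' j = g i + g j"
  shows "sum g' A = sum g A"
proof -
  have j: "j \<in> A - {i}" using assms by simp
  have f2: "finite (A - {i})" using assms by simp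
  have "sum g' A = g' i + (g' j + sum g' (A - {i} - {j}))"
    using sum.remove[OF assms(1,2), of g'] sum.remove[OF f2 j, of g'] by simp
  moreover have "sum g A = g i + (g j + sum g (A - {i} - {j}))"
    using sum.remove[OF assms(1,2), of g] sum.remove[OF f2 j, of g] by simp
  moreover have "sum g' (A - {i} - {j}) = sum g (A - {i} - {j})"
    using assms by (intro sum.cong) auto
  ultimately show ?thesis using assms(6) by (simp add: add.assoc[symmetric])
qed

lemma prod_change2:
  fixes g g' :: "'b \<Rightarrow> 'a::comm_monoid_mult"
  assumes "finite A" "i \<in> A" "j \<in> A" "i \<noteq> j" "\<And>k. k \<in> A \<Longrightarrow> k \<noteq> i \<Longrightarrow> k \<noteq> j \<Longrightarrow> g' k = g k"
    "g' i * g' j = g i * g j"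
  shows "prod g' A = prod g A"
proof -
  have j: "j \<in> A - {i}" using assms by simp
  have f2: "finite (A - {i})" using assms by simp
  have "prod g' A = g' i * (g' j * prod g' (A - {i} - {j}))"
    using prod.remove[OF assms(1,2), of g'] prod.remove[OF f2 j, of g'] by simp
  moreover have "prod g A = g i * (g j * prod g (A - {i} - {j}))"
    using prod.remove[OF assms(1,2), of g] prod.remove[OF f2 j, of g] by simp
  moreover have "prod g' (A - {i} - {j}) = prod g (A - {i} - {j})"
    using assms by (intro prod.cong) auto
  ultimately show ?thesis using assms(6) by (simp add: mult.assoc[symmetric])
qed

context lgv begin

definition X :: "((nat \<Rightarrow> nat) \<times> (nat \<Rightarrow> int \<Rightarrow> int \<times> bool)) set" where
  "X = (SIGMA \<sigma>:{\<sigma>. \<sigma> permutes {..<n}}. PiE {..<n} (\<lambda>k. paths (\<sigma> k) k))"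

definition Vk where "Vk s k = V (fst s k) k (snd s k)"

definition occ where "occ s w = {k \<in> {..<n}. w \<in> Vk s k}"

definition BadV where "BadV s = {w. 2 \<le> card (occ s w)}"

definition vvS :: "(int \<times> int) set \<Rightarrow> int \<times> int" where
  "vvS B = (Min (fst ` B), Min {h. (Min (fst ` B), h) \<in> B})"

definition vv where "vv s = vvS (BadV s)"
definition ii where "ii s = Min (occ s (vv s))"
definition jj where "jj s = Min (occ s (vv s) - {ii s})"

definition swp where
  "swp s = (fst s \<circ> Transposition.transpose (ii s) (jj s),
            (snd s)(ii s := comb (fst (vv s)) (snd s (jj s)) (snd s (ii s)),
                    jj s := comb (fst (vv s)) (snd s (ii s)) (snd s (jj s))))"

lemma finite_V: "finite (V j i f)"
proof -
  have "V j i f \<subseteq> (SIGMA x:{P j - 1..Q i}. {ht j i f x..ht j i f (x+1)})"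
    unfolding V_def by auto
  then show ?thesis by (rule finite_subset) auto
qed

lemma finite_BadV: "finite (BadV s)"
proof -
  have "BadV s \<subseteq> (\<Union>k<n. Vk s k)"
  proof
    fix w assume "w \<in> BadV s"
    then have "occ s w \<noteq> {}" unfolding BadV_def by auto
    then show "w \<in> (\<Union>k<n. Vk s k)" unfolding occ_def by auto
  qed
  then show ?thesis by (rule finite_subset) (auto simp: Vk_def finite_V)
qed

lemma vv_bad:
  assumes "BadV s \<noteq> {}"
  shows "vv s \<in> BadV s"
proof -
  let ?B = "BadV s"
  have fin: "finite ?B" by (rule finite_BadV)
  have "Min (fst ` ?B) \<in> fst ` ?B" using fin assms by (intro Min_in) auto
  then have ne: "{h. (Min (fst ` ?B), h) \<in> ?B} \<noteq> {}" by force
  have "{h. (Min (fst ` ?B), h) \<in> ?B} \<subseteq> snd ` ?B" by force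
  then have "finite {h. (Min (fst ` ?B), h) \<in> ?B}" using fin by (meson finite_imageI finite_subset)
  then have "Min {h. (Min (fst ` ?B), h) \<in> ?B} \<in> {h. (Min (fst ` ?B), h) \<in> ?B}"
    using ne by (intro Min_in) auto
  then show ?thesis unfolding vv_def vvS_def by simp
qed

lemma occ_card_sum: "card (occ s w) = (\<Sum>k<n. ind w (Vk s k))"
proof -
  have "card (occ s w) = (\<Sum>k\<in>occ s w. 1)" by simp
  also have "\<dots> = (\<Sum>k<n. if w \<in> Vk s k then 1 else 0)"
    unfolding occ_def by (subst sum.inter_filter) auto
  finally show ?thesis unfolding ind_def .
qed

lemma ij_props:
  assumes "BadV s \<noteq> {}"
  shows "ii s \<in> occ s (vv s)" "jj s \<in> occ s (vv s)" "ii s \<noteq> jj s"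
proof -
  have c: "2 \<le> card (occ s (vv s))" using vv_bad[OF assms] unfolding BadV_def by simp
  have fin: "finite (occ s (vv s))" unfolding occ_def by auto
  then have ne: "occ s (vv s) \<noteq> {}" using c by auto
  show i: "ii s \<in> occ s (vv s)" unfolding ii_def using fin ne by (rule Min_in)
  have "card (occ s (vv s) - {ii s}) \<ge> 1" using c i fin by simp
  then have ne2: "occ s (vv s) - {ii s} \<noteq> {}" by (metis card.empty not_one_le_zero)
  have "jj s \<in> occ s (vv s) - {ii s}" unfolding jj_def using fin ne2 by (intro Min_in) auto
  then show "jj s \<in> occ s (vv s)" "ii s \<noteq> jj s" by auto
qed

end

context lgv begin

lemma X_memD:
  assumes "s \<in> X"
  shows "fst s permutes {..<n}" "\<And>k. k < n \<Longrightarrow> snd s k \<in> paths (fst s k) k"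
    "\<And>k. k \<ge> n \<Longrightarrow> snd s k = undefined"
proof -
  obtain \<sigma> F where 1: "\<sigma> \<in> {\<sigma>. \<sigma> permutes {..<n}}" and 2: "F \<in> PiE {..<n} (\<lambda>k. paths (\<sigma> k) k)"
    and sF: "s = (\<sigma>, F)"
    using assms unfolding X_def by (rule SigmaE)
  show "fst s permutes {..<n}" using 1 sF by simp
  show "snd s k \<in> paths (fst s k) k" if "k < n" for k
    unfolding sF fst_conv snd_conv by (rule PiE_mem[OF 2]) (use that in blast)
  show "snd s k = undefined" if "k \<ge> n" for k
    unfolding sF snd_conv by (rule PiE_arb[OF 2]) (use that in simp)
qed

lemma bad_facts:
  assumes s: "s \<in> X" and b: "BadV s \<noteq> {}"
  shows "ii s < n" "jj s < n" "ii s \<noteq> jj s"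
    "vv s \<in> V (fst s (ii s)) (ii s) (snd s (ii s))"
    "vv s \<in> V (fst s (jj s)) (jj s) (snd s (jj s))"
proof -
  have "ii s \<in> occ s (vv s)" "jj s \<in> occ s (vv s)" "ii s \<noteq> jj s" by (rule ij_props[OF b])+
  then show "ii s < n" "jj s < n" "ii s \<noteq> jj s"
    "vv s \<in> V (fst s (ii s)) (ii s) (snd s (ii s))"
    "vv s \<in> V (fst s (jj s)) (jj s) (snd s (jj s))" unfolding occ_def Vk_def by simp_all
qed

lemma swp_setup:
  assumes s: "s \<in> X" and b: "BadV s \<noteq> {}"
  shows "ii s < n" "jj s < n" "ii s \<noteq> jj s"
    "(fst (vv s), snd (vv s)) \<in> V (fst s (ii s)) (ii s) (snd s (ii s))"
    "(fst (vv s), snd (vv s)) \<in> V (fst s (jj s)) (jj s) (snd s (jj s))"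
    "fst s permutes {..<n}" "\<And>k. k < n \<Longrightarrow> snd s k \<in> paths (fst s k) k" "\<And>k. k \<ge> n \<Longrightarrow> snd s k = undefined"
    "swp s = (fst s \<circ> Transposition.transpose (ii s) (jj s),
       (snd s)(ii s := comb (fst (vv s)) (snd s (jj s)) (snd s (ii s)), jj s := comb (fst (vv s)) (snd s (ii s)) (snd s (jj s))))"
  using bad_facts[OF s b] X_memD[OF s] unfolding swp_def by auto

lemma swp_X:
  assumes s: "s \<in> X" and b: "BadV s \<noteq> {}"
  shows "swp s \<in> X"
proof -
  define \<sigma> where "\<sigma> = fst s"
  define F where "F = snd s"
  define i where "i = ii s"
  define j where "j = jj s"
  define x0 where "x0 = fst (vv s)"
  define h0 where "h0 = snd (vv s)"
  have sF: "\<sigma> = fst s" "F = snd s" using \<sigma>_def F_def by auto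
  have v: "vv s = (x0, h0)" unfolding x0_def h0_def by simp
  note facts = swp_setup[OF s b, folded \<sigma>_def F_def i_def j_def x0_def h0_def]
  have ij: "i < n" "j < n" "i \<noteq> j" and vi: "(x0,h0) \<in> V (\<sigma> i) i (F i)" and vj: "(x0,h0) \<in> V (\<sigma> j) j (F j)"
    and p: "\<sigma> permutes {..<n}" and Fk: "\<And>k. k < n \<Longrightarrow> F k \<in> paths (\<sigma> k) k"
    and Fu: "\<And>k. k \<ge> n \<Longrightarrow> F k = undefined"
    and sw: "swp s = (\<sigma> \<circ> Transposition.transpose i j, F(i := comb x0 (F j) (F i), j := comb x0 (F i) (F j)))"
    using facts by auto
  have p': "\<sigma> \<circ> Transposition.transpose i j permutes {..<n}"
    using permutes_compose[OF permutes_swap_id p] ij by auto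
  have ci: "comb x0 (F j) (F i) \<in> paths (\<sigma> j) i" by (rule comb_paths(1)[OF Fk[OF ij(2)] Fk[OF ij(1)] vj vi])
  have cj: "comb x0 (F i) (F j) \<in> paths (\<sigma> i) j" by (rule comb_paths(1)[OF Fk[OF ij(1)] Fk[OF ij(2)] vi vj])
  have "F(i := comb x0 (F j) (F i), j := comb x0 (F i) (F j)) \<in> PiE {..<n} (\<lambda>k. paths ((\<sigma> \<circ> Transposition.transpose i j) k) k)"
  proof (rule PiE_I)
    fix k assume k: "k \<in> {..<n}"
    show "(F(i := comb x0 (F j) (F i), j := comb x0 (F i) (F j))) k \<in> paths ((\<sigma> \<circ> Transposition.transpose i j) k) k"
    proof (cases "k = i")
      case True then show ?thesis using ci ij by simp
    next
      case ki: False
      show ?thesis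
      proof (cases "k = j")
        case True then show ?thesis using cj ki by simp
      next
        case False then show ?thesis using Fk[of k] k ki by simp
      qed
    qed
  next
    fix k assume "k \<notin> {..<n}"
    then show "(F(i := comb x0 (F j) (F i), j := comb x0 (F i) (F j))) k = undefined"
      using Fu[of k] ij by auto
  qed
  then show ?thesis unfolding sw X_def using p' by auto
qed

lemma swp_Vk_other:
  assumes "k \<noteq> ii s" "k \<noteq> jj s"
  shows "Vk (swp s) k = Vk s k"
  using assms unfolding swp_def Vk_def by simp

lemma swp_ind:
  assumes s: "s \<in> X" and b: "BadV s \<noteq> {}"
  shows "ind w (Vk (swp s) (ii s)) + ind w (Vk (swp s) (jj s)) = ind w (Vk s (ii s)) + ind w (Vk s (jj s))"
proof -
  define \<sigma> where "\<sigma> = fst s"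
  define F where "F = snd s"
  define i where "i = ii s"
  define j where "j = jj s"
  define x0 where "x0 = fst (vv s)"
  define h0 where "h0 = snd (vv s)"
  have sF: "\<sigma> = fst s" "F = snd s" using \<sigma>_def F_def by auto
  have v: "vv s = (x0, h0)" unfolding x0_def h0_def by simp
  note facts = swp_setup[OF s b, folded \<sigma>_def F_def i_def j_def x0_def h0_def]
  have ij: "i < n" "j < n" "i \<noteq> j" and vi: "(x0,h0) \<in> V (\<sigma> i) i (F i)" and vj: "(x0,h0) \<in> V (\<sigma> j) j (F j)"
    and p: "\<sigma> permutes {..<n}" and Fk: "\<And>k. k < n \<Longrightarrow> F k \<in> paths (\<sigma> k) k"
    and Fu: "\<And>k. k \<ge> n \<Longrightarrow> F k = undefined"
    and sw: "swp s = (\<sigma> \<circ> Transposition.transpose i j, F(i := comb x0 (F j) (F i), j := comb x0 (F i) (F j)))"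
    using facts by auto
  have "Vk (swp s) i = V (\<sigma> j) i (comb x0 (F j) (F i))" "Vk (swp s) j = V (\<sigma> i) j (comb x0 (F i) (F j))"
    unfolding sw Vk_def using ij by auto
  moreover have "Vk s i = V (\<sigma> i) i (F i)" "Vk s j = V (\<sigma> j) j (F j)" unfolding sF Vk_def by auto
  ultimately show ?thesis
    using swap_count[OF Fk[OF ij(2)] Fk[OF ij(1)] vj vi, of w] unfolding i_def j_def by simp
qed

lemma swp_card:
  assumes s: "s \<in> X" and b: "BadV s \<noteq> {}"
  shows "card (occ (swp s) w) = card (occ s w)"
  unfolding occ_card_sum
proof (rule sum_change2)
  show "ii s \<in> {..<n}" "jj s \<in> {..<n}" "ii s \<noteq> jj s" using bad_facts[OF s b] by auto
  show "ind w (Vk (swp s) (ii s)) + ind w (Vk (swp s) (jj s)) = ind w (Vk s (ii s)) + ind w (Vk s (jj s))"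
    by (rule swp_ind[OF s b])
qed (auto simp: swp_Vk_other)

lemma swp_BadV:
  assumes s: "s \<in> X" and b: "BadV s \<noteq> {}"
  shows "BadV (swp s) = BadV s"
  unfolding BadV_def using swp_card[OF s b] by simp

lemma swp_vv:
  assumes s: "s \<in> X" and b: "BadV s \<noteq> {}"
  shows "vv (swp s) = vv s"
  unfolding vv_def using swp_BadV[OF s b] by simp

lemma swp_occ_vv:
  assumes s: "s \<in> X" and b: "BadV s \<noteq> {}"
  shows "occ (swp s) (vv s) = occ s (vv s)"
proof -
  define \<sigma> where "\<sigma> = fst s"
  define F where "F = snd s"
  define i where "i = ii s"
  define j where "j = jj s"
  define x0 where "x0 = fst (vv s)"
  define h0 where "h0 = snd (vv s)"
  have sF: "\<sigma> = fst s" "F = snd s" using \<sigma>_def F_def by auto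
  have v: "vv s = (x0, h0)" unfolding x0_def h0_def by simp
  note facts = swp_setup[OF s b, folded \<sigma>_def F_def i_def j_def x0_def h0_def]
  have ij: "i < n" "j < n" "i \<noteq> j" and vi: "(x0,h0) \<in> V (\<sigma> i) i (F i)" and vj: "(x0,h0) \<in> V (\<sigma> j) j (F j)"
    and p: "\<sigma> permutes {..<n}" and Fk: "\<And>k. k < n \<Longrightarrow> F k \<in> paths (\<sigma> k) k"
    and Fu: "\<And>k. k \<ge> n \<Longrightarrow> F k = undefined"
    and sw: "swp s = (\<sigma> \<circ> Transposition.transpose i j, F(i := comb x0 (F j) (F i), j := comb x0 (F i) (F j)))"
    using facts by auto
  have "(x0,h0) \<in> V (\<sigma> j) i (comb x0 (F j) (F i))"
    unfolding comb_V(3)[OF Fk[OF ij(2)] Fk[OF ij(1)] vj vi] using vi vj unfolding V_def by auto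
  then have 1: "vv s \<in> Vk (swp s) i" unfolding sw Vk_def v using ij by auto
  have "(x0,h0) \<in> V (\<sigma> i) j (comb x0 (F i) (F j))"
    unfolding comb_V(3)[OF Fk[OF ij(1)] Fk[OF ij(2)] vi vj] using vi vj unfolding V_def by auto
  then have 2: "vv s \<in> Vk (swp s) j" unfolding sw Vk_def v using ij by auto
  have 3: "vv s \<in> Vk s i" "vv s \<in> Vk s j" using vi vj unfolding Vk_def sF v by auto
  have A: "vv s \<in> Vk (swp s) k \<longleftrightarrow> vv s \<in> Vk s k" for k
  proof (cases "k = i \<or> k = j")
    case True then show ?thesis using 1 2 3 by auto
  next
    case False then show ?thesis using swp_Vk_other[of k s] unfolding i_def j_def by auto
  qed
  show ?thesis unfolding occ_def using A by simp
qed

lemma swp_ij: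
  assumes s: "s \<in> X" and b: "BadV s \<noteq> {}"
  shows "ii (swp s) = ii s" "jj (swp s) = jj s"
proof -
  show 1: "ii (swp s) = ii s" unfolding ii_def swp_vv[OF s b] swp_occ_vv[OF s b] ..
  show "jj (swp s) = jj s" unfolding jj_def swp_vv[OF s b] swp_occ_vv[OF s b] 1 ..
qed

lemma swp_swp:
  assumes s: "s \<in> X" and b: "BadV s \<noteq> {}"
  shows "swp (swp s) = s"
proof -
  define \<sigma> where "\<sigma> = fst s"
  define F where "F = snd s"
  define i where "i = ii s"
  define j where "j = jj s"
  define x0 where "x0 = fst (vv s)"
  define h0 where "h0 = snd (vv s)"
  have sF: "\<sigma> = fst s" "F = snd s" using \<sigma>_def F_def by auto
  have v: "vv s = (x0, h0)" unfolding x0_def h0_def by simp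
  note facts = swp_setup[OF s b, folded \<sigma>_def F_def i_def j_def x0_def h0_def]
  have ij: "i < n" "j < n" "i \<noteq> j" and vi: "(x0,h0) \<in> V (\<sigma> i) i (F i)" and vj: "(x0,h0) \<in> V (\<sigma> j) j (F j)"
    and p: "\<sigma> permutes {..<n}" and Fk: "\<And>k. k < n \<Longrightarrow> F k \<in> paths (\<sigma> k) k"
    and Fu: "\<And>k. k \<ge> n \<Longrightarrow> F k = undefined"
    and sw: "swp s = (\<sigma> \<circ> Transposition.transpose i j, F(i := comb x0 (F j) (F i), j := comb x0 (F i) (F j)))"
    using facts by auto
  have "swp (swp s) = (fst (swp s) \<circ> Transposition.transpose i j,
     (snd (swp s))(i := comb x0 (snd (swp s) j) (snd (swp s) i), j := comb x0 (snd (swp s) i) (snd (swp s) j)))"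
    unfolding swp_def[of "swp s"] swp_ij[OF s b] swp_vv[OF s b] i_def j_def v by simp
  also have "\<dots> = (\<sigma>, F)"
  proof -
    have e1: "\<sigma> \<circ> Transposition.transpose i j \<circ> Transposition.transpose i j = \<sigma>"
      by (simp add: o_assoc[symmetric])
    have e2: "(F(i := comb x0 (F j) (F i), j := comb x0 (F i) (F j)))(i := comb x0 (comb x0 (F i) (F j)) (comb x0 (F j) (F i)),
               j := comb x0 (comb x0 (F j) (F i)) (comb x0 (F i) (F j))) = F"
    proof
      fix k show "((F(i := comb x0 (F j) (F i), j := comb x0 (F i) (F j)))(i := comb x0 (comb x0 (F i) (F j)) (comb x0 (F j) (F i)),
               j := comb x0 (comb x0 (F j) (F i)) (comb x0 (F i) (F j)))) k = F k"
        by (simp add: comb_comb)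
    qed
    show ?thesis unfolding sw fst_conv snd_conv using ij e1 e2 by simp
  qed
  finally show ?thesis using sF by simp
qed

lemma swp_neq:
  assumes s: "s \<in> X" and b: "BadV s \<noteq> {}"
  shows "swp s \<noteq> s"
proof
  assume e: "swp s = s"
  have ij: "ii s < n" "jj s < n" "ii s \<noteq> jj s" using bad_facts[OF s b] by auto
  have p: "fst s permutes {..<n}" using X_memD[OF s] by auto
  have "fst (swp s) (ii s) = fst s (jj s)" unfolding swp_def by simp
  then have "fst s (jj s) = fst s (ii s)" using e by simp
  then show False using permutes_inj[OF p] ij by (metis injD)
qed

definition tm :: "(int \<Rightarrow> 'a::comm_ring_1) \<Rightarrow> (int \<Rightarrow> 'a) \<Rightarrow> int \<Rightarrow> (nat \<Rightarrow> nat) \<times> (nat \<Rightarrow> int \<Rightarrow> int \<times> bool) \<Rightarrow> 'a" where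
  "tm y z c0 s = of_int (sign (fst s)) * (\<Prod>k<n. pw y z c0 (fst s k) k (snd s k))"

lemma swp_tm:
  assumes s: "s \<in> X" and b: "BadV s \<noteq> {}"
  shows "tm y z c0 (swp s) = - tm y z c0 s"
proof -
  define \<sigma> where "\<sigma> = fst s"
  define F where "F = snd s"
  define i where "i = ii s"
  define j where "j = jj s"
  define x0 where "x0 = fst (vv s)"
  define h0 where "h0 = snd (vv s)"
  have sF: "\<sigma> = fst s" "F = snd s" using \<sigma>_def F_def by auto
  have v: "vv s = (x0, h0)" unfolding x0_def h0_def by simp
  note facts = swp_setup[OF s b, folded \<sigma>_def F_def i_def j_def x0_def h0_def]
  have ij: "i < n" "j < n" "i \<noteq> j" and vi: "(x0,h0) \<in> V (\<sigma> i) i (F i)" and vj: "(x0,h0) \<in> V (\<sigma> j) j (F j)"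
    and p: "\<sigma> permutes {..<n}" and Fk: "\<And>k. k < n \<Longrightarrow> F k \<in> paths (\<sigma> k) k"
    and Fu: "\<And>k. k \<ge> n \<Longrightarrow> F k = undefined"
    and sw: "swp s = (\<sigma> \<circ> Transposition.transpose i j, F(i := comb x0 (F j) (F i), j := comb x0 (F i) (F j)))"
    using facts by auto
  have sg: "sign (\<sigma> \<circ> Transposition.transpose i j) = - sign \<sigma>"
  proof -
    have "permutation \<sigma>" using p permutation_permutes by blast
    moreover have "permutation (Transposition.transpose i j)" by (simp add: permutation_swap_id)
    ultimately show ?thesis by (simp add: sign_compose sign_swap_id ij)
  qed
  have x0: "P (\<sigma> j) - 1 \<le> x0" "x0 \<le> Q j" "P (\<sigma> i) - 1 \<le> x0" "x0 \<le> Q i"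
    using vi vj unfolding V_def by auto
  have pr: "(\<Prod>k<n. pw y z c0 ((\<sigma> \<circ> Transposition.transpose i j) k) k ((F(i := comb x0 (F j) (F i), j := comb x0 (F i) (F j))) k))
      = (\<Prod>k<n. pw y z c0 (\<sigma> k) k (F k))"
  proof (rule prod_change2)
    show "i \<in> {..<n}" "j \<in> {..<n}" "i \<noteq> j" using ij by auto
    show "pw y z c0 ((\<sigma> \<circ> Transposition.transpose i j) i) i ((F(i := comb x0 (F j) (F i), j := comb x0 (F i) (F j))) i) *
          pw y z c0 ((\<sigma> \<circ> Transposition.transpose i j) j) j ((F(i := comb x0 (F j) (F i), j := comb x0 (F i) (F j))) j) =
          pw y z c0 (\<sigma> i) i (F i) * pw y z c0 (\<sigma> j) j (F j)"
      using comb_weight[OF x0, of y z c0 "F j" "F i"] ij by (simp add: mult.commute)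
  qed auto
  show ?thesis unfolding tm_def sw using pr sg unfolding sF by simp
qed

lemma sum_bad_zero:
  "(\<Sum>s\<in>{s\<in>X. BadV s \<noteq> {}}. tm y z c0 s) = 0"
proof (rule involution_cancel[where g = swp])
  show "finite {s \<in> X. BadV s \<noteq> {}}"
  proof -
    have "finite X" unfolding X_def
      by (intro finite_SigmaI finite_PiE) (auto simp: finite_paths finite_permutations)
    then show ?thesis by simp
  qed
  fix s assume "s \<in> {s \<in> X. BadV s \<noteq> {}}"
  then have s: "s \<in> X" and b: "BadV s \<noteq> {}" by auto
  show "swp s \<in> {s \<in> X. BadV s \<noteq> {}}" using swp_X[OF s b] swp_BadV[OF s b] b by auto
  show "swp (swp s) = s" by (rule swp_swp[OF s b])
  show "swp s \<noteq> s" by (rule swp_neq[OF s b])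
  show "tm y z c0 (swp s) = - tm y z c0 s" by (rule swp_tm[OF s b])
qed

end

context lgv begin

lemma Pmono: "j \<le> j' \<Longrightarrow> P j' \<le> P j" using Pdec'[of j j'] by simp
lemma Qmono: "j \<le> j' \<Longrightarrow> Q j' \<le> Q j" using Qdec'[of j j'] by simp

lemma bad_of_two:
  assumes "i < n" "j < n" "i \<noteq> j" "w \<in> Vk s i" "w \<in> Vk s j"
  shows "w \<in> BadV s"
proof -
  have "{i,j} \<subseteq> occ s w" unfolding occ_def using assms by auto
  then have "card {i,j} \<le> card (occ s w)" by (rule card_mono[rotated]) (simp add: occ_def)
  then show ?thesis unfolding BadV_def using assms(3) by simp
qed

lemma flag_chain:
  assumes "i \<le> i'" "i' < n" "\<And>m. i \<le> m \<Longrightarrow> m < i' \<Longrightarrow> P m - 1 \<le> Q (Suc m)"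
  shows "\<alpha> i \<le> \<alpha> i' \<and> \<beta> i \<le> \<beta> i'"
  using assms
proof (induction i' rule: dec_induct)
  case base then show ?case by simp
next
  case (step k)
  have "\<alpha> i \<le> \<alpha> k \<and> \<beta> i \<le> \<beta> k" using step by auto
  moreover have "\<alpha> k \<le> \<alpha> (Suc k) \<and> \<beta> k \<le> \<beta> (Suc k)" using flags[of k] step by auto
  ultimately show ?case by auto
qed

lemma block:
  assumes p: "\<sigma> permutes {..<n}" and ex: "\<And>k. k < n \<Longrightarrow> P (\<sigma> k) - 1 \<le> Q k"
    and m: "Suc m < n" and no: "Q (Suc m) < P m - 1" and k: "k < n"
  shows "k \<le> m \<longleftrightarrow> \<sigma> k \<le> m"
proof -
  have up: "\<sigma> k' > m" if "m < k'" "k' < n" for k'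
  proof (rule ccontr)
    assume "\<not> m < \<sigma> k'"
    then have "P m \<le> P (\<sigma> k')" using Pmono by auto
    moreover have "P (\<sigma> k') - 1 \<le> Q k'" using ex that by auto
    moreover have "Q k' \<le> Q (Suc m)" using Qmono that by auto
    ultimately show False using no by simp
  qed
  let ?S = "{Suc m..<n}"
  have sub: "\<sigma> ` ?S \<subseteq> ?S"
  proof
    fix x assume "x \<in> \<sigma> ` ?S"
    then obtain k' where k': "k' \<in> ?S" "x = \<sigma> k'" by auto
    have "\<sigma> k' < n" using permutes_in_image[OF p] k' by auto
    then show "x \<in> ?S" using up[of k'] k' by auto
  qed
  have inj: "inj_on \<sigma> ?S" using permutes_inj[OF p] by (auto intro: inj_on_subset)
  have eq: "\<sigma> ` ?S = ?S" using sub inj by (simp add: card_image card_subset_eq)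
  show ?thesis
  proof
    assume km: "k \<le> m"
    show "\<sigma> k \<le> m"
    proof (rule ccontr)
      assume "\<not> \<sigma> k \<le> m"
      moreover have "\<sigma> k < n" using permutes_in_image[OF p] k by auto
      ultimately have "\<sigma> k \<in> \<sigma> ` ?S" using eq by auto
      then obtain k' where "k' \<in> ?S" "\<sigma> k = \<sigma> k'" by auto
      then have "k = k'" using permutes_inj[OF p] by (metis injD)
      then show False using km \<open>k' \<in> ?S\<close> by auto
    qed
  next
    assume "\<sigma> k \<le> m"
    then show "k \<le> m" using up[of k] k by (meson not_le)
  qed
qed

lemma good_id:
  assumes s: "s \<in> X" and g: "BadV s = {}"
  shows "fst s = id"
proof -
  define \<sigma> where "\<sigma> = fst s"
  define F where "F = snd s"
  have p: "\<sigma> permutes {..<n}" using X_memD(1)[OF s] unfolding \<sigma>_def .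
  have Fk: "\<And>k. k < n \<Longrightarrow> F k \<in> paths (\<sigma> k) k" using X_memD(2)[OF s] unfolding \<sigma>_def F_def .
  have ex: "\<And>k. k < n \<Longrightarrow> P (\<sigma> k) - 1 \<le> Q k" using Fk paths_range by blast
  have Vk': "\<And>k. Vk s k = V (\<sigma> k) k (F k)" unfolding Vk_def \<sigma>_def F_def ..
  have nobad: False if "i < n" "j < n" "i \<noteq> j" "w \<in> V (\<sigma> i) i (F i)" "w \<in> V (\<sigma> j) j (F j)" for i j w
    using bad_of_two[of i j w s] that g unfolding Vk' by auto
  have "\<forall>k<n. \<sigma> k = k"
  proof (rule ccontr)
    assume "\<not> (\<forall>k<n. \<sigma> k = k)"
    then have exk: "\<exists>k. k < n \<and> \<sigma> k \<noteq> k" by auto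
    define i where "i = (LEAST k. k < n \<and> \<sigma> k \<noteq> k)"
    have i: "i < n" "\<sigma> i \<noteq> i" using LeastI_ex[OF exk] unfolding i_def by auto
    have below: "\<sigma> k = k" if "k < i" for k
    proof (rule ccontr)
      assume "\<sigma> k \<noteq> k"
      then have "i \<le> k" unfolding i_def using that i by (intro Least_le) auto
      then show False using that by simp
    qed
    have inj: "inj \<sigma>" using permutes_inj[OF p] .
    have si: "i < \<sigma> i"
    proof (rule ccontr)
      assume "\<not> i < \<sigma> i"
      then have "\<sigma> i < i" using i by auto
      then have "\<sigma> (\<sigma> i) = \<sigma> i" using below by auto
      then have "\<sigma> i = i" using inj by (metis injD)
      then show False using i by simp
    qed
    have sin: "\<sigma> i < n" using permutes_in_image[OF p] i by auto
    obtain j where j: "\<sigma> j = i" using permutes_surj[OF p] by (metis surjD)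
    have jn: "j < n"
    proof (rule ccontr)
      assume "\<not> j < n" then have "\<sigma> j = j" using permutes_not_in[OF p] by auto
      then show False using j i by auto
    qed
    have ij: "i < j"
    proof (rule ccontr)
      assume "\<not> i < j"
      moreover have "j \<noteq> i" using j i by auto
      ultimately have "j < i" by simp
      then have "\<sigma> j = j" using below by auto
      then show False using j \<open>j \<noteq> i\<close> by simp
    qed
    have ov1: "P m - 1 \<le> Q (Suc m)" if "i \<le> m" "m < \<sigma> i" for m
    proof (rule ccontr)
      assume "\<not> P m - 1 \<le> Q (Suc m)"
      then have "i \<le> m \<longleftrightarrow> \<sigma> i \<le> m" using block[OF p ex, of m i] that sin i by auto
      then show False using that by auto
    qed
    have ov2: "P m - 1 \<le> Q (Suc m)" if "i \<le> m" "m < j" for m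
    proof (rule ccontr)
      assume "\<not> P m - 1 \<le> Q (Suc m)"
      then have "j \<le> m \<longleftrightarrow> \<sigma> j \<le> m" using block[OF p ex, of m j] that jn by auto
      then show False using that j by auto
    qed
    have fa: "\<alpha> i \<le> \<alpha> (\<sigma> i)" using flag_chain[of i "\<sigma> i"] ov1 si sin by auto
    have fb: "\<beta> i \<le> \<beta> j" using flag_chain[of i j] ov2 ij jn by auto
    define f where "f = F i"
    define g where "g = F j"
    have f: "f \<in> paths (\<sigma> i) i" unfolding f_def using Fk i by auto
    have gp: "g \<in> paths i j" unfolding g_def using Fk[OF jn] j by simp
    define x0 where "x0 = P i - 1"
    define x1 where "x1 = Q j"
    have x01: "x0 \<le> x1" using paths_range[OF gp] unfolding x0_def x1_def .
    have Psi: "P (\<sigma> i) \<le> P i - 1" using Plt[OF si] by simp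
    have Qji: "Q j < Q i" using Qlt[OF ij] .
    have long: "P (\<sigma> i) \<le> Q i" using Psi PQ[of i] by simp
    have mf: "htmono (\<sigma> i) i f" by (rule htmono_long[OF f long])
    define hf where "hf = ht (\<sigma> i) i f"
    define hg where "hg = ht i j g"
    have hfm: "hf a \<le> hf b" if "x0 \<le> a" "a \<le> b" "b \<le> Q i + 1" for a b
      using mf that Psi unfolding htmono_def hf_def x0_def by auto
    have hg0: "hg x0 = \<alpha> i" unfolding hg_def x0_def by (rule ht_start)
    have hg1: "hg (x1 + 1) = \<beta> j" unfolding hg_def x1_def by (rule ht_end) (use x01 in \<open>simp add: x0_def x1_def\<close>)
    have hf0: "\<alpha> (\<sigma> i) \<le> hf x0"
    proof -
      have "hf (P (\<sigma> i) - 1) \<le> hf x0" using mf Psi x01 Qji unfolding htmono_def hf_def x0_def x1_def by auto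
      then show ?thesis unfolding hf_def ht_start .
    qed
    have hf1: "hf x1 \<le> \<beta> i"
    proof -
      have "hf x1 \<le> hf (Q i + 1)" using hfm x01 Qji unfolding x1_def by auto
      then show ?thesis unfolding hf_def using ht_end[OF PQ, of "\<sigma> i"] long by (simp add: ht_end)
    qed
    have noint: False if "x0 \<le> x" "x \<le> x1" "hf x \<le> h" "h \<le> hf (x+1)" "hg x \<le> h" "h \<le> hg (x+1)" for x h
    proof -
      have "(x,h) \<in> V (\<sigma> i) i f" using that Psi Qji unfolding V_def hf_def x0_def x1_def by auto
      moreover have "(x,h) \<in> V (\<sigma> j) j (F j)" using that j unfolding V_def hg_def g_def x0_def x1_def by auto
      ultimately show False using nobad[of i j "(x,h)"] i jn ij unfolding f_def by auto
    qed
    have above: "hg (x+1) < hf x" if "x0 \<le> x" "x \<le> x1" for x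
      using that
    proof (induction x rule: int_ge_induct)
      case base
      show ?case
      proof (rule ccontr)
        assume "\<not> hg (x0 + 1) < hf x0"
        then show False using noint[of x0 "hf x0"] hfm[of x0 "x0+1"] hf0 fa hg0 base x01 Qji
          unfolding x1_def by auto
      qed
    next
      case (step x)
      have ih: "hg (x+1) < hf x" using step by auto
      show ?case
      proof (rule ccontr)
        assume "\<not> hg (x + 1 + 1) < hf (x + 1)"
        then show False using noint[of "x+1" "hf (x+1)"] hfm[of x "x+1"] hfm[of "x+1" "x+1+1"] ih step Qji
          unfolding x1_def by auto
      qed
    qed
    have "hg (x1+1) < hf x1" using above[OF x01 order.refl] .
    then show False using hg1 hf1 fb by simp
  qed
  then have "\<sigma> = id" using permutes_not_in[OF p] by (metis eq_id_iff lessThan_iff)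
  then show ?thesis unfolding \<sigma>_def .
qed

end

context lgv begin

definition Fam where "Fam = PiE {..<n} (\<lambda>k. paths k k)"

definition ccs :: "(nat \<Rightarrow> int \<Rightarrow> int \<times> bool) \<Rightarrow> bool" where
  "ccs F \<longleftrightarrow> (\<forall>m x. Suc m < n \<longrightarrow> P m \<le> x \<longrightarrow> x \<le> Q m \<longrightarrow> P (Suc m) \<le> x - 1 \<longrightarrow> x - 1 \<le> Q (Suc m)
      \<longrightarrow> fst (F m x) < fst (F (Suc m) (x - 1)))"

lemma Fam_X: "F \<in> Fam \<Longrightarrow> (id, F) \<in> X"
  unfolding Fam_def X_def by (auto simp: permutes_id)

lemma Fam_paths: "F \<in> Fam \<Longrightarrow> k < n \<Longrightarrow> F k \<in> paths k k"
  unfolding Fam_def by (auto simp: PiE_iff)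

lemma good_ccs:
  assumes F: "F \<in> Fam" and g: "BadV (id, F) = {}"
  shows "ccs F"
  unfolding ccs_def
proof (intro allI impI)
  fix m x assume m: "Suc m < n" and x: "P m \<le> x" "x \<le> Q m" "P (Suc m) \<le> x - 1" "x - 1 \<le> Q (Suc m)"
  define f where "f = F m"
  define g where "g = F (Suc m)"
  have f: "f \<in> paths m m" unfolding f_def using Fam_paths[OF F] m by auto
  have gp: "g \<in> paths (Suc m) (Suc m)" unfolding g_def using Fam_paths[OF F] m by auto
  define hf where "hf = ht m m f"
  define hg where "hg = ht (Suc m) (Suc m) g"
  have mf: "htmono m m f" using htmono_long[OF f] x by auto
  have mg: "htmono (Suc m) (Suc m) g" using htmono_long[OF gp] x by auto
  have ov: "P m - 1 \<le> Q (Suc m)" using x by simp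
  have fl: "\<alpha> m \<le> \<alpha> (Suc m)" using flags[OF m ov] by simp
  have Pd: "P (Suc m) \<le> P m - 1" by (rule Pdec)
  have Qd: "Q (Suc m) \<le> Q m - 1" by (rule Qdec)
  have hfm: "hf a \<le> hf b" if "P m - 1 \<le> a" "a \<le> b" "b \<le> Q m + 1" for a b
    using mf that unfolding htmono_def hf_def by auto
  have hgm: "hg a \<le> hg b" if "P (Suc m) - 1 \<le> a" "a \<le> b" "b \<le> Q (Suc m) + 1" for a b
    using mg that unfolding htmono_def hg_def by auto
  have noint: False if "P m - 1 \<le> y" "y \<le> Q (Suc m)" "hf y \<le> h" "h \<le> hf (y+1)" "hg y \<le> h" "h \<le> hg (y+1)" for y h
  proof -
    have "(y,h) \<in> Vk (id, F) m" using that Qd unfolding Vk_def V_def hf_def f_def by auto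
    moreover have "(y,h) \<in> Vk (id, F) (Suc m)" using that Pd unfolding Vk_def V_def hg_def g_def by auto
    ultimately have "(y,h) \<in> BadV (id, F)" using bad_of_two[of m "Suc m"] m by auto
    then show False using g by simp
  qed
  have below: "hf (y+1) < hg y" if "P m - 1 \<le> y" "y \<le> Q (Suc m)" for y
    using that
  proof (induction y rule: int_ge_induct)
    case base
    have a: "hf (P m - 1) = \<alpha> m" unfolding hf_def by (rule ht_start)
    have b: "\<alpha> (Suc m) \<le> hg (P m - 1)"
      using hgm[of "P (Suc m) - 1" "P m - 1"] Pd base unfolding hg_def ht_start by auto
    show ?case
    proof (rule ccontr)
      assume "\<not> hf (P m - 1 + 1) < hg (P m - 1)"
      then show False using noint[of "P m - 1" "hg (P m - 1)"] a b fl hgm[of "P m - 1" "P m - 1 + 1"] base Pd by auto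
    qed
  next
    case (step y)
    have ih: "hf (y+1) < hg y" using step by auto
    show ?case
    proof (rule ccontr)
      assume "\<not> hf (y + 1 + 1) < hg (y + 1)"
      then show False using noint[of "y+1" "hg (y+1)"] ih hgm[of y "y+1"] hgm[of "y+1" "y+1+1"] step Pd by auto
    qed
  qed
  have "hf x < hg (x - 1)" using below[of "x - 1"] x by simp
  moreover have "hf x = fst (f x)" unfolding hf_def ht_def using x by auto
  moreover have "hg (x - 1) = fst (g (x - 1))" unfolding hg_def ht_def using x by auto
  ultimately show "fst (F m x) < fst (F (Suc m) (x - 1))" unfolding f_def g_def by simp
qed

lemma pair_lt:
  assumes F: "F \<in> Fam" and c: "ccs F" and m: "Suc m < n" and x: "P m - 1 \<le> x" "x \<le> Q (Suc m)"
  shows "ht m m (F m) (x+1) < ht (Suc m) (Suc m) (F (Suc m)) x"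
proof -
  have Pd: "P (Suc m) \<le> P m - 1" by (rule Pdec)
  have Qd: "Q (Suc m) \<le> Q m - 1" by (rule Qdec)
  have "ht m m (F m) (x+1) = fst (F m (x+1))" unfolding ht_def using x Qd by auto
  moreover have "ht (Suc m) (Suc m) (F (Suc m)) x = fst (F (Suc m) x)" unfolding ht_def using x Pd by auto
  moreover have "fst (F m (x+1)) < fst (F (Suc m) (x + 1 - 1))"
  proof -
    have h: "P m \<le> x+1" "x+1 \<le> Q m" "P (Suc m) \<le> x+1-1" "x+1-1 \<le> Q (Suc m)" using x Pd Qd by auto
    show ?thesis by (rule c[unfolded ccs_def, rule_format, OF m h])
  qed
  ultimately show ?thesis by simp
qed

lemma chain_lt:
  assumes F: "F \<in> Fam" and c: "ccs F" and kk: "Suc k \<le> k'" "k' < n" and x: "P k - 1 \<le> x" "x \<le> Q k'"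
  shows "ht k k (F k) (x+1) < ht k' k' (F k') x"
  using kk x
proof (induction k' rule: dec_induct)
  case base
  then show ?case using pair_lt[OF F c, of k x] by simp
next
  case (step k')
  have k'n: "Suc k' < n" using step by simp
  have xq: "x \<le> Q k'" using step Qdec[of k'] by simp
  have ih: "ht k k (F k) (x+1) < ht k' k' (F k') x" using step xq by simp
  have Pk: "P k' \<le> P k - 1" using Plt[of k k'] step by simp
  have "ht k' k' (F k') (x+1) < ht (Suc k') (Suc k') (F (Suc k')) x"
    using pair_lt[OF F c k'n, of x] step Pk by simp
  moreover have "ht k' k' (F k') x \<le> ht k' k' (F k') (x+1)"
  proof -
    have fk: "F k' \<in> paths k' k'" using Fam_paths[OF F] step by simp
    have "Q (Suc k') \<le> Q k' - 1" by (rule Qdec)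
    then have "x + 1 \<le> Q k'" using step by simp
    then show ?thesis unfolding ht_def using paths_mono[OF fk, of x "x+1"] Pk step by auto
  qed
  ultimately show ?case using ih by simp
qed

lemma ccs_good:
  assumes F: "F \<in> Fam" and c: "ccs F"
  shows "BadV (id, F) = {}"
proof (rule ccontr)
  assume "BadV (id, F) \<noteq> {}"
  then obtain w where w: "w \<in> BadV (id, F)" by auto
  obtain x h where xh: "w = (x,h)" by (cases w)
  have "2 \<le> card (occ (id, F) w)" using w unfolding BadV_def by simp
  then obtain k k' where kk: "k \<in> occ (id, F) w" "k' \<in> occ (id, F) w" "k < k'"
  proof -
    assume r: "\<And>k k'. k \<in> occ (id, F) w \<Longrightarrow> k' \<in> occ (id, F) w \<Longrightarrow> k < k' \<Longrightarrow> thesis"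
    have fin: "finite (occ (id, F) w)" unfolding occ_def by auto
    have ne: "occ (id, F) w \<noteq> {}" using \<open>2 \<le> card _\<close> by auto
    define a where "a = Min (occ (id, F) w)"
    have a: "a \<in> occ (id, F) w" unfolding a_def using fin ne by (rule Min_in)
    have "card (occ (id, F) w - {a}) \<ge> 1" using \<open>2 \<le> card _\<close> a fin by simp
    then obtain b where b: "b \<in> occ (id, F) w - {a}" by (metis card.empty ex_in_conv not_one_le_zero)
    have "a \<le> b" unfolding a_def using fin b by auto
    then have "a < b" using b by auto
    then show thesis using r a b by auto
  qed
  have k'n: "k' < n" using kk unfolding occ_def by auto
  have v1: "(x,h) \<in> V k k (F k)" and v2: "(x,h) \<in> V k' k' (F k')"
    using kk unfolding occ_def Vk_def xh by auto
  have x: "P k - 1 \<le> x" "x \<le> Q k'" using v1 v2 unfolding V_def by auto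
  have "ht k k (F k) (x+1) < ht k' k' (F k') x"
    by (rule chain_lt[OF F c _ k'n x]) (use kk in simp)
  then show False using v1 v2 unfolding V_def by auto
qed

lemma det_sum_reduce:
  "(\<Sum>s\<in>X. tm y z c0 s) = (\<Sum>F\<in>{F\<in>Fam. ccs F}. \<Prod>k<n. pw y z c0 k k (F k))"
proof -
  have finX: "finite X" unfolding X_def
    by (intro finite_SigmaI finite_PiE) (auto simp: finite_paths finite_permutations)
  have "(\<Sum>s\<in>X. tm y z c0 s) = (\<Sum>s\<in>{s\<in>X. BadV s \<noteq> {}}. tm y z c0 s) + (\<Sum>s\<in>{s\<in>X. BadV s = {}}. tm y z c0 s)"
    using finX by (subst sum.union_disjoint[symmetric]) (auto intro: sum.cong)
  also have "(\<Sum>s\<in>{s\<in>X. BadV s \<noteq> {}}. tm y z c0 s) = 0" by (rule sum_bad_zero)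
  also have "{s\<in>X. BadV s = {}} = (\<lambda>F. (id :: nat \<Rightarrow> nat, F)) ` {F\<in>Fam. ccs F}"
  proof (intro equalityI subsetI)
    fix s assume s: "s \<in> {s\<in>X. BadV s = {}}"
    then have id: "fst s = id" using good_id by auto
    have "snd s \<in> Fam" using s id unfolding X_def Fam_def by auto
    moreover have "s = (id, snd s)" using id by (metis prod.collapse)
    ultimately show "s \<in> (\<lambda>F. (id :: nat \<Rightarrow> nat, F)) ` {F\<in>Fam. ccs F}" using good_ccs s by (metis (mono_tags, lifting) image_eqI mem_Collect_eq)
  next
    fix s assume "s \<in> (\<lambda>F. (id :: nat \<Rightarrow> nat, F)) ` {F\<in>Fam. ccs F}"
    then obtain F where "s = (id, F)" "F \<in> Fam" "ccs F" by auto
    then show "s \<in> {s\<in>X. BadV s = {}}" using Fam_X ccs_good by auto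
  qed
  also have "(\<Sum>s\<in>(\<lambda>F. (id :: nat \<Rightarrow> nat, F)) ` {F\<in>Fam. ccs F}. tm y z c0 s) = (\<Sum>F\<in>{F\<in>Fam. ccs F}. tm y z c0 (id, F))"
    by (subst sum.reindex) (auto simp: inj_on_def)
  also have "\<dots> = (\<Sum>F\<in>{F\<in>Fam. ccs F}. \<Prod>k<n. pw y z c0 k k (F k))"
    unfolding tm_def by simp
  finally show ?thesis by simp
qed

end

context lgv begin

lemma col_chain:
  assumes F: "F \<in> Fam" and c: "ccs F" and kk: "Suc k \<le> k'" "k' < n"
    and x: "P k \<le> x" "x \<le> Q k" "P k' \<le> x - int (k' - k)" "x - int (k' - k) \<le> Q k'"
  shows "fst (F k x) < fst (F k' (x - int (k' - k)))"
  using kk x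
proof (induction k' rule: dec_induct)
  case base
  have "fst (F k x) < fst (F (Suc k) (x - 1))"
    by (rule c[unfolded ccs_def, rule_format]) (use base in auto)
  then show ?case by simp
next
  case (step k')
  have k'n: "Suc k' < n" using step by simp
  have e: "x - int (Suc k' - k) = x - int (k' - k) - 1" using step by simp
  have Pk: "P k' + int (k' - k) \<le> P k" using Pdec'[of k k'] step by simp
  have Qk: "Q (Suc k') \<le> Q k' - 1" by (rule Qdec)
  have x1: "P k' \<le> x - int (k' - k)" "x - int (k' - k) \<le> Q k'" using step Pk Qk e by auto
  have ih: "fst (F k x) < fst (F k' (x - int (k' - k)))" using step x1 by auto
  have "fst (F k' (x - int (k' - k))) < fst (F (Suc k') (x - int (k' - k) - 1))"
    by (rule c[unfolded ccs_def, rule_format]) (use k'n x1 step e in auto)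
  then show ?case unfolding e using ih by (rule less_trans[rotated])
qed

lemma entry_sum:
  "hsup y z (\<alpha> j) (\<beta> i) (\<alpha> j + P j + c0) (\<beta> i + Q i + c0) (Q i - P j + 1) = (\<Sum>f\<in>paths j i. pw y z c0 j i f)"
proof (cases "P j - 1 \<le> Q i")
  case True
  then show ?thesis unfolding paths_def pw_def using row_lemma[OF True, of y z c0 "\<alpha> j" "\<beta> i"] by simp
next
  case False
  then have "Q i - P j + 1 < 0" by simp
  then show ?thesis unfolding paths_def using False by (simp add: hsup_neg)
qed

lemma det_expand:
  "(\<Sum>\<sigma>\<in>{\<sigma>. \<sigma> permutes {..<n}}. of_int (sign \<sigma>) * (\<Prod>k<n. \<Sum>f\<in>paths (\<sigma> k) k. pw y z c0 (\<sigma> k) k f))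
   = (\<Sum>s\<in>X. tm y z c0 s)"
proof -
  have "(\<Sum>\<sigma>\<in>{\<sigma>. \<sigma> permutes {..<n}}. of_int (sign \<sigma>) * (\<Prod>k<n. \<Sum>f\<in>paths (\<sigma> k) k. pw y z c0 (\<sigma> k) k f))
     = (\<Sum>\<sigma>\<in>{\<sigma>. \<sigma> permutes {..<n}}. \<Sum>F\<in>PiE {..<n} (\<lambda>k. paths (\<sigma> k) k). of_int (sign \<sigma>) * (\<Prod>k<n. pw y z c0 (\<sigma> k) k (F k)))"
    by (rule sum.cong[OF refl]) (simp add: prod_sum_PiE finite_paths sum_distrib_left)
  also have "\<dots> = (\<Sum>s\<in>X. tm y z c0 s)"
    unfolding X_def tm_def
    by (subst sum.Sigma) (auto simp: finite_permutations finite_PiE finite_paths split_def)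
  finally show ?thesis .
qed

end

lemma part_pos: "1 \<le> i \<Longrightarrow> part p i = (if i \<le> length p then p ! (i - 1) else 0)"
  unfolding part_def by simp

lemma part_mono:
  assumes p: "is_partition p" and i: "1 \<le> i" "i \<le> i'"
  shows "part p i' \<le> part p i"
proof (cases "i' \<le> length p")
  case True
  have "p ! (i' - 1) \<le> p ! (i - 1)"
    using sorted_rev_nth_mono[of p "i - 1" "i' - 1"] p True i unfolding is_partition_def by auto
  then show ?thesis using True i unfolding part_def by auto
next
  case False
  then show ?thesis unfolding part_def by auto
qed

definition Pc :: "nat list \<Rightarrow> nat \<Rightarrow> int" where "Pc mu j = int (part mu (Suc j)) - int j"
definition Qc :: "nat list \<Rightarrow> nat \<Rightarrow> int" where "Qc lam i = int (part lam (Suc i)) - int (Suc i)"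

lemma lgv_inst:
  assumes plam: "is_partition lam" and pmu: "is_partition mu" and cont: "contained mu lam"
    and rf: "row_flags lam mu a' b'"
  shows "lgv n (Pc mu) (Qc lam) (\<lambda>j. a' (Suc j)) (\<lambda>i. b' (Suc i))"
proof
  fix m
  show "Pc mu (Suc m) \<le> Pc mu m - 1"
    using part_mono[OF pmu, of "Suc m" "Suc (Suc m)"] unfolding Pc_def by simp
  show "Qc lam (Suc m) \<le> Qc lam m - 1"
    using part_mono[OF plam, of "Suc m" "Suc (Suc m)"] unfolding Qc_def by simp
  show "Pc mu m - 1 \<le> Qc lam m"
  proof -
    have "part mu (Suc m) \<le> part lam (Suc m)" using cont unfolding contained_def by blast
    then show ?thesis unfolding Pc_def Qc_def by simp
  qed
  assume "Suc m < n" "Pc mu m - 1 \<le> Qc lam (Suc m)"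
  then have "part mu (Suc m) < part lam (Suc (Suc m))" unfolding Pc_def Qc_def by simp
  then show "a' (Suc m) \<le> a' (Suc (Suc m)) \<and> b' (Suc m) \<le> b' (Suc (Suc m))"
    using rf unfolding row_flags_def by auto
qed

definition phi :: "nat list \<Rightarrow> nat list \<Rightarrow> int \<Rightarrow> (nat \<Rightarrow> int \<Rightarrow> int \<times> bool) \<Rightarrow> nat \<Rightarrow> nat \<Rightarrow> int + int" where
  "phi lam mu r F i c = (if (i,c) \<in> cells lam mu then
      (if snd (F (i-1) (int c - int i)) then Inr (fst (F (i-1) (int c - int i)) + content lam r i c)
       else Inl (fst (F (i-1) (int c - int i)))) else Inl 0)"

context
  fixes lam mu :: "nat list" and n :: nat
  assumes plam: "is_partition lam" and pmu: "is_partition mu" and cont: "contained mu lam"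
    and len: "length lam \<le> n"
begin

lemma cells_iff:
  "(i,c) \<in> cells lam mu \<longleftrightarrow> (1 \<le> i \<and> i - 1 < n \<and> Pc mu (i-1) \<le> int c - int i \<and> int c - int i \<le> Qc lam (i-1))"
proof
  assume "(i,c) \<in> cells lam mu"
  then have h: "1 \<le> i" "i \<le> length lam" "part mu i < c" "c \<le> part lam i" unfolding cells_def by auto
  then have s: "Suc (i - 1) = i" by simp
  show "1 \<le> i \<and> i - 1 < n \<and> Pc mu (i-1) \<le> int c - int i \<and> int c - int i \<le> Qc lam (i-1)"
    unfolding Pc_def Qc_def s using h len by auto
next
  assume h: "1 \<le> i \<and> i - 1 < n \<and> Pc mu (i-1) \<le> int c - int i \<and> int c - int i \<le> Qc lam (i-1)"
  then have s: "Suc (i - 1) = i" by simp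
  have h2: "part mu i < c" "c \<le> part lam i" using h unfolding Pc_def Qc_def s by auto
  have "i \<le> length lam"
  proof (rule ccontr)
    assume "\<not> i \<le> length lam"
    then have "part lam i = 0" unfolding part_def by simp
    then show False using h2 by simp
  qed
  then show "(i,c) \<in> cells lam mu" unfolding cells_def using h h2 by auto
qed

lemma cells_bij:
  "bij_betw (\<lambda>(i,c). (i - 1, int c - int i)) (cells lam mu) (SIGMA k:{..<n}. {Pc mu k..Qc lam k})"
proof (rule bij_betw_byWitness[where f' = "\<lambda>(k,x). (Suc k, nat (x + int k + 1))"])
  show "\<forall>a\<in>cells lam mu. (\<lambda>(k,x). (Suc k, nat (x + int k + 1))) ((\<lambda>(i,c). (i - 1, int c - int i)) a) = a"
  proof
    fix a assume a: "a \<in> cells lam mu"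
    obtain i c where ic: "a = (i,c)" by (cases a)
    have "1 \<le> i" using a ic cells_iff by auto
    then show "(\<lambda>(k,x). (Suc k, nat (x + int k + 1))) ((\<lambda>(i,c). (i - 1, int c - int i)) a) = a"
      unfolding ic by (simp add: of_nat_diff)
  qed
  show "\<forall>a\<in>(SIGMA k:{..<n}. {Pc mu k..Qc lam k}). (\<lambda>(i,c). (i - 1, int c - int i)) ((\<lambda>(k,x). (Suc k, nat (x + int k + 1))) a) = a"
  proof
    fix a assume a: "a \<in> (SIGMA k:{..<n}. {Pc mu k..Qc lam k})"
    obtain k x where kx: "a = (k,x)" by (cases a)
    have "Pc mu k \<le> x" using a kx by auto
    then have "0 \<le> x + int k + 1" unfolding Pc_def by simp
    then show "(\<lambda>(i,c). (i - 1, int c - int i)) ((\<lambda>(k,x). (Suc k, nat (x + int k + 1))) a) = a"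
      unfolding kx by simp
  qed
  show "(\<lambda>(i,c). (i - 1, int c - int i)) ` cells lam mu \<subseteq> (SIGMA k:{..<n}. {Pc mu k..Qc lam k})"
  proof
    fix b assume "b \<in> (\<lambda>(i,c). (i - 1, int c - int i)) ` cells lam mu"
    then obtain i c where "(i,c) \<in> cells lam mu" "b = (i - 1, int c - int i)" by auto
    then show "b \<in> (SIGMA k:{..<n}. {Pc mu k..Qc lam k})" using cells_iff by auto
  qed
  show "(\<lambda>(k,x). (Suc k, nat (x + int k + 1))) ` (SIGMA k:{..<n}. {Pc mu k..Qc lam k}) \<subseteq> cells lam mu"
  proof
    fix b assume "b \<in> (\<lambda>(k,x). (Suc k, nat (x + int k + 1))) ` (SIGMA k:{..<n}. {Pc mu k..Qc lam k})"
    then obtain k x where kx: "k < n" "Pc mu k \<le> x" "x \<le> Qc lam k" "b = (Suc k, nat (x + int k + 1))" by auto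
    have "0 \<le> x + int k + 1" using kx unfolding Pc_def by simp
    then have e: "int (nat (x + int k + 1)) - int (Suc k) = x" by simp
    show "b \<in> cells lam mu" unfolding kx(4) cells_iff using kx e by simp
  qed
qed

end

lemma decode_eq:
  assumes "(if snd e then Inr (fst e + C) else Inl (fst e)) = (if snd e' then Inr (fst e' + C) else (Inl (fst e') :: int + int))"
  shows "e = e'"
  using assms by (cases e; cases e') (auto split: if_splits)

context
  fixes lam mu :: "nat list" and r :: int and a' b' :: "nat \<Rightarrow> int" and n :: nat
  assumes plam: "is_partition lam" and pmu: "is_partition mu" and cont: "contained mu lam"
    and rf: "row_flags lam mu a' b'" and len: "length lam \<le> n"
begin

interpretation L: lgv n "Pc mu" "Qc lam" "\<lambda>j. a' (Suc j)" "\<lambda>i. b' (Suc i)"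
  by (rule lgv_inst[OF plam pmu cont rf])

lemmas ci = cells_iff[OF plam pmu cont len]

lemma wt_phi:
  assumes F: "F \<in> L.Fam"
  shows "wt lam mu y z (phi lam mu r F) = (\<Prod>k<n. L.pw y z (r - 1 + int (length lam)) k k (F k))"
proof -
  define c0 where "c0 = r - 1 + int (length lam)"
  define g where "g = (\<lambda>(k,x). cw y z c0 x (F k x))"
  have "wt lam mu y z (phi lam mu r F) = (\<Prod>ic\<in>cells lam mu. g ((\<lambda>(i,c). (i - 1, int c - int i)) ic))"
    unfolding wt_def
  proof (rule prod.cong[OF refl])
    fix ic assume ic: "ic \<in> cells lam mu"
    obtain i c where e: "ic = (i,c)" by (cases ic)
    have ct: "content lam r i c = int c - int i + c0" unfolding content_def c0_def by simp
    show "(case ic of (i, j) \<Rightarrow> wt_entry y z (phi lam mu r F i j)) = g ((\<lambda>(i,c). (i - 1, int c - int i)) ic)"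
      using ic unfolding e g_def phi_def cw_def by (simp add: ct add.assoc)
  qed
  also have "\<dots> = (\<Prod>kx\<in>(SIGMA k:{..<n}. {Pc mu k..Qc lam k}). g kx)"
    by (rule prod.reindex_bij_betw[OF cells_bij[OF plam pmu cont len]])
  also have "\<dots> = (\<Prod>k<n. \<Prod>x\<in>{Pc mu k..Qc lam k}. g (k,x))"
    by (subst prod.Sigma) (auto simp: split_def)
  also have "\<dots> = (\<Prod>k<n. L.pw y z c0 k k (F k))"
    unfolding L.pw_def g_def by simp
  finally show ?thesis unfolding c0_def .
qed

lemma phi_inj: "inj_on (phi lam mu r) L.Fam"
proof (rule inj_onI)
  fix F G assume F: "F \<in> L.Fam" and G: "G \<in> L.Fam" and e: "phi lam mu r F = phi lam mu r G"
  show "F = G"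
  proof (intro ext)
    fix k x
    show "F k x = G k x"
    proof (cases "k < n \<and> Pc mu k \<le> x \<and> x \<le> Qc lam k")
      case True
      define c where "c = nat (x + int k + 1)"
      have x0: "0 \<le> x + int k + 1" using True unfolding Pc_def by simp
      then have cx: "int c - int (Suc k) = x" unfolding c_def by simp
      have cell: "(Suc k, c) \<in> cells lam mu" unfolding ci using True cx by simp
      have "phi lam mu r F (Suc k) c = phi lam mu r G (Suc k) c" using e by simp
      moreover have "phi lam mu r H (Suc k) c = (if snd (H k x) then Inr (fst (H k x) + content lam r (Suc k) c) else Inl (fst (H k x)))" for H
        unfolding phi_def using cell cx by simp
      ultimately show ?thesis by (metis decode_eq)
    next
      case False
      show ?thesis
      proof (cases "k < n")
        case True
        then have "x \<notin> {Pc mu k..Qc lam k}" using False by auto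
        then show ?thesis using L.paths_undef[OF L.Fam_paths[OF F True]] L.paths_undef[OF L.Fam_paths[OF G True]] by simp
      next
        case False
        then have "F k = undefined" "G k = undefined" using F G unfolding L.Fam_def by (auto simp: PiE_def extensional_def)
        then show ?thesis by simp
      qed
    qed
  qed
qed


lemma phi_super:
  assumes F: "F \<in> L.Fam" and c: "L.ccs F"
  shows "phi lam mu r F \<in> super_tableaux lam mu r a' b'"
proof -
  define Tt where "Tt = (\<lambda>i c. if (i,c) \<in> cells lam mu then fst (F (i-1) (int c - int i)) else 0)"
  have cellD: "i - 1 < n \<and> Pc mu (i-1) \<le> int c - int i \<and> int c - int i \<le> Qc lam (i-1) \<and> Suc (i - 1) = i"
    if "(i,c) \<in> cells lam mu" for i c using that unfolding ci by auto
  have c1: "a' i \<le> Tt i c \<and> Tt i c \<le> b' i" if ic: "(i,c) \<in> cells lam mu" for i c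
  proof -
    have d: "i - 1 < n" "Pc mu (i-1) \<le> int c - int i" "int c - int i \<le> Qc lam (i-1)" "Suc (i-1) = i"
      using cellD ic by auto
    have "a' (Suc (i-1)) \<le> fst (F (i-1) (int c - int i)) \<and> fst (F (i-1) (int c - int i)) \<le> b' (Suc (i-1))"
      using L.paths_val[OF L.Fam_paths[OF F d(1)] d(2) d(3)] by simp
    then show ?thesis unfolding Tt_def using ic d(4) by simp
  qed
  have c2: "Tt i c \<le> Tt i' c'" if ic: "(i,c) \<in> cells lam mu" and ic': "(i',c') \<in> cells lam mu"
    and ii: "i = i'" and cc: "c \<le> c'" for i c i' c'
  proof -
    have d: "i - 1 < n" "Pc mu (i-1) \<le> int c - int i" "int c' - int i \<le> Qc lam (i-1)"
      using cellD ic ic' ii by auto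
    have "fst (F (i-1) (int c - int i)) \<le> fst (F (i-1) (int c' - int i))"
      by (rule L.paths_mono[OF L.Fam_paths[OF F d(1)] d(2)]) (use cc d(3) in auto)
    then show "Tt i c \<le> Tt i' c'" unfolding Tt_def using ic ic' ii by simp
  qed
  have c3: "Tt i c < Tt i' c'" if ic: "(i,c) \<in> cells lam mu" and ic': "(i',c') \<in> cells lam mu"
    and cc: "c = c'" and ii: "i < i'" for i c i' c'
  proof -
    have d: "i - 1 < n" "Pc mu (i-1) \<le> int c - int i" "int c - int i \<le> Qc lam (i-1)"
      "i' - 1 < n" "Pc mu (i'-1) \<le> int c - int i'" "int c - int i' \<le> Qc lam (i'-1)" "1 \<le> i"
      using cellD ic ic' cc ci by auto
    have k: "int (i' - 1 - (i - 1)) = int i' - int i" using ii d(7) by simp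
    have "fst (F (i-1) (int c - int i)) < fst (F (i'-1) (int c - int i - int (i' - 1 - (i - 1))))"
      by (rule L.col_chain[OF F c]) (use ii d k in auto)
    then show "Tt i c < Tt i' c'" unfolding Tt_def using ic ic' cc k by simp
  qed
  have c4: "Tt i c = 0" if "(i,c) \<notin> cells lam mu" for i c
    unfolding Tt_def using that by simp
  have fl: "flagged_ssyt lam mu a' b' Tt"
    unfolding flagged_ssyt_def
  proof (intro conjI)
    show "\<forall>(i, j)\<in>cells lam mu. a' i \<le> Tt i j \<and> Tt i j \<le> b' i" using c1 by clarify
    show "\<forall>(i, j)\<in>cells lam mu. \<forall>(i', j')\<in>cells lam mu. i = i' \<and> j \<le> j' \<longrightarrow> Tt i j \<le> Tt i' j'"
      using c2 by clarify blast
    show "\<forall>(i, j)\<in>cells lam mu. \<forall>(i', j')\<in>cells lam mu. j = j' \<and> i < i' \<longrightarrow> Tt i j < Tt i' j'"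
      using c3 by clarify blast
    show "\<forall>i j. (i, j) \<notin> cells lam mu \<longrightarrow> Tt i j = 0" using c4 by clarify
  qed
  show ?thesis unfolding super_tableaux_def
  proof (intro CollectI exI[of _ Tt] conjI fl ballI allI impI)
    fix ic assume ic: "ic \<in> cells lam mu"
    obtain i c where e: "ic = (i,c)" by (cases ic)
    show "case ic of (i, j) \<Rightarrow> phi lam mu r F i j = Inl (Tt i j) \<or> phi lam mu r F i j = Inr (Tt i j + content lam r i j)"
      unfolding e phi_def Tt_def using ic e by simp
  next
    fix i c assume "(i,c) \<notin> cells lam mu"
    then show "phi lam mu r F i c = Inl 0" unfolding phi_def by simp
  qed
qed


lemma phi_surj:
  assumes T: "T \<in> super_tableaux lam mu r a' b'"
  shows "\<exists>F. F \<in> L.Fam \<and> L.ccs F \<and> phi lam mu r F = T"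
proof -
  obtain Tt where fl: "flagged_ssyt lam mu a' b' Tt"
    and dec: "\<forall>(i, j)\<in>cells lam mu. T i j = Inl (Tt i j) \<or> T i j = Inr (Tt i j + content lam r i j)"
    and out: "\<forall>i j. (i, j) \<notin> cells lam mu \<longrightarrow> T i j = Inl 0"
    using T unfolding super_tableaux_def by blast
  have b1: "a' i \<le> Tt i c \<and> Tt i c \<le> b' i" if "(i,c) \<in> cells lam mu" for i c
    using fl that unfolding flagged_ssyt_def by blast
  have b2: "Tt i c \<le> Tt i c'" if "(i,c) \<in> cells lam mu" "(i,c') \<in> cells lam mu" "c \<le> c'" for i c c'
  proof -
    have "\<forall>(i, j)\<in>cells lam mu. \<forall>(i', j')\<in>cells lam mu. i = i' \<and> j \<le> j' \<longrightarrow> Tt i j \<le> Tt i' j'"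
      using fl unfolding flagged_ssyt_def by blast
    then show ?thesis using that by blast
  qed
  have b3: "Tt i c < Tt i' c" if "(i,c) \<in> cells lam mu" "(i',c) \<in> cells lam mu" "i < i'" for i i' c
  proof -
    have "\<forall>(i, j)\<in>cells lam mu. \<forall>(i', j')\<in>cells lam mu. j = j' \<and> i < i' \<longrightarrow> Tt i j < Tt i' j'"
      using fl unfolding flagged_ssyt_def by blast
    then show ?thesis using that by blast
  qed
  define cl where "cl = (\<lambda>k x. nat (x + int k + 1))"
  define F where "F = (\<lambda>k. if k < n then (\<lambda>x. if Pc mu k \<le> x \<and> x \<le> Qc lam k then
        (Tt (Suc k) (cl k x), \<not> isl (T (Suc k) (cl k x))) else undefined) else undefined)"
  have clx: "int (cl k x) - int (Suc k) = x" if "Pc mu k \<le> x" for k x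
  proof -
    have "0 \<le> x + int k + 1" using that unfolding Pc_def by simp
    then show ?thesis unfolding cl_def by simp
  qed
  have cell: "(Suc k, cl k x) \<in> cells lam mu" if "k < n" "Pc mu k \<le> x" "x \<le> Qc lam k" for k x
    unfolding ci using that clx[OF that(2)] by simp
  have Fk: "F k \<in> L.paths k k" if k: "k < n" for k
  proof -
    have r: "Pc mu k - 1 \<le> Qc lam k" by (rule L.PQ)
    have "F k \<in> rowpaths (a' (Suc k)) (b' (Suc k)) (Pc mu k) (Qc lam k)"
      unfolding rowpaths_def
    proof (intro CollectI conjI ballI impI)
      show "F k \<in> PiE {Pc mu k..Qc lam k} (\<lambda>_. {a' (Suc k)..b' (Suc k)} \<times> UNIV)"
      proof (rule PiE_I)
        fix x assume x: "x \<in> {Pc mu k..Qc lam k}"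
        then show "F k x \<in> {a' (Suc k)..b' (Suc k)} \<times> UNIV"
          using b1[OF cell[OF k]] k unfolding F_def by auto
      next
        fix x assume "x \<notin> {Pc mu k..Qc lam k}"
        then show "F k x = undefined" using k unfolding F_def by auto
      qed
      fix x x' assume x: "x \<in> {Pc mu k..Qc lam k}" "x' \<in> {Pc mu k..Qc lam k}" "x \<le> x'"
      have "cl k x \<le> cl k x'" using x clx[of k x] clx[of k x'] by auto
      then show "fst (F k x) \<le> fst (F k x')"
        using b2[OF cell[OF k] cell[OF k]] x k unfolding F_def by auto
    qed
    then show ?thesis unfolding L.paths_def using r by simp
  qed
  have FF: "F \<in> L.Fam" unfolding L.Fam_def
  proof (rule PiE_I)
    fix k assume "k \<in> {..<n}" then show "F k \<in> L.paths k k" using Fk by simp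
  next
    fix k assume "k \<notin> {..<n}" then show "F k = undefined" unfolding F_def by simp
  qed
  have cc: "L.ccs F" unfolding L.ccs_def
  proof (intro allI impI)
    fix m x assume m: "Suc m < n" and x: "Pc mu m \<le> x" "x \<le> Qc lam m" "Pc mu (Suc m) \<le> x - 1" "x - 1 \<le> Qc lam (Suc m)"
    have e: "cl (Suc m) (x - 1) = cl m x" unfolding cl_def by simp
    have "Tt (Suc m) (cl m x) < Tt (Suc (Suc m)) (cl m x)"
    proof -
      have c1: "(Suc m, cl m x) \<in> cells lam mu" using cell[of m x] m x by simp
      have c2: "(Suc (Suc m), cl m x) \<in> cells lam mu" using cell[of "Suc m" "x - 1"] m x e by simp
      show ?thesis using b3[OF c1 c2] by simp
    qed
    then show "fst (F m x) < fst (F (Suc m) (x - 1))" unfolding F_def using m x e by simp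
  qed
  have "phi lam mu r F = T"
  proof (intro ext)
    fix i c
    show "phi lam mu r F i c = T i c"
    proof (cases "(i,c) \<in> cells lam mu")
      case True
      have d: "i - 1 < n" "Pc mu (i-1) \<le> int c - int i" "int c - int i \<le> Qc lam (i-1)" "Suc (i-1) = i"
        using True unfolding ci by auto
      have clc: "cl (i-1) (int c - int i) = c" unfolding cl_def using d(4) by (simp add: of_nat_diff)
      have Fv: "F (i-1) (int c - int i) = (Tt i c, \<not> isl (T i c))"
        unfolding F_def using d clc by simp
      have "T i c = Inl (Tt i c) \<or> T i c = Inr (Tt i c + content lam r i c)" using dec True by auto
      then show ?thesis unfolding phi_def Fv using True by auto
    next
      case False
      then show ?thesis unfolding phi_def using out by simp
    qed
  qed
  then show ?thesis using FF cc by blast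
qed

lemma phi_bij: "bij_betw (phi lam mu r) {F \<in> L.Fam. L.ccs F} (super_tableaux lam mu r a' b')"
  unfolding bij_betw_def
proof
  show "inj_on (phi lam mu r) {F \<in> L.Fam. L.ccs F}" using phi_inj by (rule inj_on_subset) auto
  show "phi lam mu r ` {F \<in> L.Fam. L.ccs F} = super_tableaux lam mu r a' b'"
  proof
    show "phi lam mu r ` {F \<in> L.Fam. L.ccs F} \<subseteq> super_tableaux lam mu r a' b'"
      using phi_super by auto
    show "super_tableaux lam mu r a' b' \<subseteq> phi lam mu r ` {F \<in> L.Fam. L.ccs F}"
    proof
      fix T assume "T \<in> super_tableaux lam mu r a' b'"
      then obtain F where "F \<in> L.Fam" "L.ccs F" "phi lam mu r F = T" using phi_surj by blast
      then show "T \<in> phi lam mu r ` {F \<in> L.Fam. L.ccs F}" by blast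
    qed
  qed
qed


lemma schur_eq:
  "flagged_schur lam mu r a' b' y z n = (\<Sum>T\<in>super_tableaux lam mu r a' b'. wt lam mu y z T)"
proof -
  define c0 where "c0 = r - 1 + int (length lam)"
  define g where "g = (\<lambda>(i0, j0). let i = Suc i0; j = Suc j0;
           a = a' j + content lam r j (Suc (part mu j));
           b = b' i + content lam r i (part lam i)
       in hsup y z (a' j) (b' i) a b
            (int (part lam i) - int (part mu j) - int i + int j))"
  have gij: "g (i, j) = (\<Sum>f\<in>L.paths j i. L.pw y z c0 j i f)" for i j
  proof -
    have "g (i, j) = hsup y z (a' (Suc j)) (b' (Suc i)) (a' (Suc j) + Pc mu j + c0) (b' (Suc i) + Qc lam i + c0) (Qc lam i - Pc mu j + 1)"
      unfolding g_def Let_def content_def Pc_def Qc_def c0_def by (simp add: algebra_simps)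
    also have "\<dots> = (\<Sum>f\<in>L.paths j i. L.pw y z c0 j i f)" by (rule L.entry_sum)
    finally show ?thesis .
  qed
  have "flagged_schur lam mu r a' b' y z n = det (mat n n g)"
    unfolding flagged_schur_def g_def ..
  also have "\<dots> = (\<Sum>p\<in>{p. p permutes {..<n}}. of_int (sign p) * (\<Prod>i<n. g (i, p i)))"
  proof -
    have "det (mat n n g) = (\<Sum>p\<in>{p. p permutes {0..<n}}. of_int (sign p) * (\<Prod>i=0..<n. mat n n g $$ (i, p i)))"
      unfolding det_def by simp
    also have "\<dots> = (\<Sum>p\<in>{p. p permutes {..<n}}. of_int (sign p) * (\<Prod>i<n. g (i, p i)))"
    proof (rule sum.cong)
      show "{p. p permutes {0..<n}} = {p. p permutes {..<n}}" by (simp add: atLeast0LessThan)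
    next
      fix p assume p: "p \<in> {p. p permutes {..<n}}"
      have "(\<Prod>i=0..<n. mat n n g $$ (i, p i)) = (\<Prod>i<n. g (i, p i))"
        unfolding atLeast0LessThan
      proof (rule prod.cong[OF refl])
        fix i assume i: "i \<in> {..<n}"
        then have "p i < n" using permutes_in_image[of p "{..<n}" i] p by auto
        then show "mat n n g $$ (i, p i) = g (i, p i)" using i by simp
      qed
      then show "of_int (sign p) * (\<Prod>i=0..<n. mat n n g $$ (i, p i)) = of_int (sign p) * (\<Prod>i<n. g (i, p i))"
        by simp
    qed
    finally show ?thesis .
  qed
  also have "\<dots> = (\<Sum>p\<in>{p. p permutes {..<n}}. of_int (sign p) * (\<Prod>k<n. \<Sum>f\<in>L.paths (p k) k. L.pw y z c0 (p k) k f))"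
    unfolding gij ..
  also have "\<dots> = (\<Sum>s\<in>L.X. L.tm y z c0 s)" by (rule L.det_expand)
  also have "\<dots> = (\<Sum>F\<in>{F\<in>L.Fam. L.ccs F}. \<Prod>k<n. L.pw y z c0 k k (F k))" by (rule L.det_sum_reduce)
  also have "\<dots> = (\<Sum>F\<in>{F\<in>L.Fam. L.ccs F}. wt lam mu y z (phi lam mu r F))"
    by (rule sum.cong[OF refl]) (simp add: wt_phi c0_def)
  also have "\<dots> = (\<Sum>T\<in>super_tableaux lam mu r a' b'. wt lam mu y z T)"
    by (rule sum.reindex_bij_betw[OF phi_bij])
  finally show ?thesis .
qed

end

theorem corollary4p9:
  fixes lam mu :: "nat list" and r :: int and a' b' :: "nat \<Rightarrow> int"
    and y z :: "int \<Rightarrow> 'a::comm_ring_1" and n :: nat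
  assumes "is_partition lam" and "is_partition mu" and "contained mu lam"
    and "row_flags lam mu a' b'"
    and "length lam \<le> n"
  shows "flagged_schur lam mu r a' b' y z n =
         (\<Sum>T\<in>super_tableaux lam mu r a' b'. wt lam mu y z T)"
  by (rule schur_eq[OF assms])

end
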